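(* For every integer $d \ge 2$ there exists a constant $C(d) > 0$ such that for every Coxeter polytope $P$ of finite volume in $\mathbb H^d$ we have \[ \operatorname{vol}(P_{\le 2}) \ge C(d)\operatorname{vol}(P), \] where $P_{\le 2} = \{x \in P : \exists \gamma \in \Gamma_P,\ d(x,\gamma x) \le 1\}$.
   Context: A hyperplane in $\mathbb H^d$ is a complete totally geodesic subspace of codimension one. A polytope is a finite-volume region of $\mathbb H^d$ delimited by finitely many hyperplanes. A polytope is Coxeter if each dihedral angle between two adjacent faces is of the form $\pi/m$ for some integer $m \ge 2$. $\Gamma_P$ denotes the subgroup of $\mathrm{Isom}(\mathbb H^d)$ generated by the reflections in the codimension-one faces of $P$; it is discrete with fundamental domain $P$. For $R>0$, $P_{\le R} = \{x \in P : \exists \gamma\in\Gamma_P,\ d(x,\gamma x)\le R/2\}$; equivalently, the set of points of $P$ at distance at most $R/2$ from $\partial P$. $\operatorname{vol}$ is the hyperbolic $d$-dimensional volume. *)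

theory Defs
  imports "HOL-Analysis.Analysis"
begin

text \<open>Hyperbolic space \<open>\<bbbH>^d\<close>, d = CARD('n), in the Beltrami--Klein projective model:
  points are the open unit ball of \<open>real^'n\<close>; a point x corresponds to the
  hyperboloid point proportional to (x,1) in Minkowski space \<open>\<real>^{d,1}\<close>.\<close>

definition kball :: "(real^'n) set" where
  "kball = ball 0 1"

definition hdist :: "real^'n \<Rightarrow> real^'n \<Rightarrow> real" where
  "hdist x y = arcosh ((1 - x \<bullet> y) / sqrt ((1 - (norm x)\<^sup>2) * (1 - (norm y)\<^sup>2)))"

definition hvol_measure :: "(real^'n) measure" where
  "hvol_measure = density lborel
     (\<lambda>x. indicator kball x * ennreal ((1 - (norm x)\<^sup>2) powr (- (real CARD('n) + 1) / 2)))"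

definition hvol :: "(real^'n) set \<Rightarrow> ennreal" where
  "hvol S = emeasure hvol_measure S"

text \<open>A pair (a,b) describes the hyperbolic hyperplane \<open>{x \<in> kball. a\<bullet>x = b}\<close>
  (nonempty iff \<open>|b| < |a|\<close>), i.e. the Minkowski-orthogonal complement of the spacelike
  vector e = (a,b) with Lorentz form \<open>\<langle>(a,b),(a',b')\<rangle> = a\<bullet>a' - b b'\<close>; the closed half-space
  \<open>{x \<in> kball. a\<bullet>x \<le> b}\<close> has e as outward normal.\<close>
definition hyp_pair :: "real^'n \<Rightarrow> real \<Rightarrow> bool" where
  "hyp_pair a b \<longleftrightarrow> a \<noteq> 0 \<and> \<bar>b\<bar> < norm a"

definition lorentz :: "real^'n \<Rightarrow> real \<Rightarrow> real^'n \<Rightarrow> real \<Rightarrow> real" where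
  "lorentz a b a' b' = a \<bullet> a' - b * b'"

text \<open>Hyperbolic reflection in the hyperplane of (a,b), written in Klein coordinates
  (Minkowski reflection \<open>X \<mapsto> X - 2\<langle>X,e\<rangle>/\<langle>e,e\<rangle> e\<close>, then projectivised).\<close>
definition hrefl :: "real^'n \<Rightarrow> real \<Rightarrow> real^'n \<Rightarrow> real^'n" where
  "hrefl a b x = (let c = 2 * (a \<bullet> x - b) / lorentz a b a b
                  in (1 / (1 - c * b)) *\<^sub>R (x - c *\<^sub>R a))"

definition hpolytope :: "(real^'n) set \<Rightarrow> bool" where
  "hpolytope P \<longleftrightarrow>
     (\<exists>H. finite H \<and> (\<forall>(a,b)\<in>H. hyp_pair a b) \<and>
          P = {x \<in> kball. \<forall>(a,b)\<in>H. a \<bullet> x \<le> b}) \<and>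
     interior P \<noteq> {} \<and> hvol P < \<infinity>"

definition hface :: "(real^'n) set \<Rightarrow> real^'n \<Rightarrow> real \<Rightarrow> (real^'n) set" where
  "hface P a b = {x \<in> P. a \<bullet> x = b}"

definition facet_pair :: "(real^'n) set \<Rightarrow> real^'n \<Rightarrow> real \<Rightarrow> bool" where
  "facet_pair P a b \<longleftrightarrow> hyp_pair a b \<and> (\<forall>x\<in>P. a \<bullet> x \<le> b) \<and>
     aff_dim (hface P a b) = int CARD('n) - 1"

definition dihedral_angle :: "real^'n \<Rightarrow> real \<Rightarrow> real^'n \<Rightarrow> real \<Rightarrow> real" where
  "dihedral_angle a b a' b' =
     arccos (- lorentz a b a' b' / (sqrt (lorentz a b a b) * sqrt (lorentz a' b' a' b')))"

definition coxeter_polytope :: "(real^'n) set \<Rightarrow> bool" where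
  "coxeter_polytope P \<longleftrightarrow> hpolytope P \<and>
     (\<forall>a b a' b'. facet_pair P a b \<and> facet_pair P a' b' \<and>
        aff_dim (hface P a b \<inter> hface P a' b') = int CARD('n) - 2 \<longrightarrow>
        (\<exists>m::nat. m \<ge> 2 \<and> dihedral_angle a b a' b' = pi / real m))"

text \<open>\<open>\<Gamma>_P\<close>: the group generated by the reflections in the codimension-one faces of P
  (reflections are involutions, so the generated monoid is the group).\<close>
inductive_set refl_group :: "(real^'n) set \<Rightarrow> (real^'n \<Rightarrow> real^'n) set" for P where
  id_in: "id \<in> refl_group P"
| step: "facet_pair P a b \<Longrightarrow> g \<in> refl_group P \<Longrightarrow> hrefl a b \<circ> g \<in> refl_group P"

definition P_le :: "(real^'n) set \<Rightarrow> real \<Rightarrow> (real^'n) set" where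
  "P_le P R = {x \<in> P. \<exists>\<gamma>\<in>refl_group P. (\<exists>y\<in>kball. \<gamma> y \<noteq> y) \<and> hdist x (\<gamma> x) \<le> R / 2}"

end

theory Submission
  imports Defs
begin


lemma hyp_pair_N: assumes "hyp_pair a b" shows "lorentz a b a b > 0"
proof -
  have "\<bar>b\<bar> < norm a" using assms by (simp add: hyp_pair_def)
  hence "b^2 < (norm a)^2" by (simp add: abs_less_iff power2_strict_mono abs_le_square_iff)
  moreover have "(norm a)^2 = a \<bullet> a" by (simp add: power2_norm_eq_inner)
  ultimately show ?thesis by (simp add: lorentz_def power2_eq_square)
qed

lemma hrefl_ratio:
  fixes x a :: "real^'n"
  assumes x: "norm x < 1" and hp: "hyp_pair a b"
  defines "N \<equiv> lorentz a b a b" and "p \<equiv> a \<bullet> x - b"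
  shows "hdist x (hrefl a b x) = arcosh (1 + 2 * p^2 / (N * (1 - (norm x)^2)))"
proof -
  have N: "N > 0" using hyp_pair_N[OF hp] by (simp add: N_def)
  have NN: "N = a \<bullet> a - b * b" by (simp add: N_def lorentz_def)
  define c where "c = 2 * p / N"
  define den where "den = 1 - c * b"
  define X2 where "X2 = 1 - x \<bullet> x"
  have "norm x * norm x < 1 * 1" using x by (intro mult_strict_mono) auto
  hence "(norm x)^2 < 1" by (simp add: power2_eq_square)
  hence X2: "X2 > 0" by (simp add: X2_def power2_norm_eq_inner)
  have cN: "c * N = 2 * p" using N by (simp add: c_def)
  have ab: "\<bar>b\<bar> < norm a" using hp by (simp add: hyp_pair_def)
  have ax: "\<bar>a \<bullet> x\<bar> \<le> norm a * norm x" by (rule Cauchy_Schwarz_ineq2)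
  have key: "a \<bullet> a + b * b - 2 * b * (a \<bullet> x) > 0"
  proof (cases "b = 0")
    case True thus ?thesis using hp by (simp add: hyp_pair_def)
  next
    case False
    have "\<bar>2 * b * (a \<bullet> x)\<bar> \<le> 2 * \<bar>b\<bar> * (norm a * norm x)"
      using ax by (simp add: abs_mult mult_left_mono)
    also have "\<dots> < 2 * \<bar>b\<bar> * norm a"
    proof -
      have "norm a > 0" using ab by linarith
      hence "norm a * norm x < norm a * 1" using x by (intro mult_strict_left_mono) auto
      thus ?thesis using False by simp
    qed
    also have "\<dots> \<le> a \<bullet> a + b * b"
    proof -
      have "0 \<le> (norm a - \<bar>b\<bar>)^2" by simp
      thus ?thesis by (simp add: power2_eq_square algebra_simps dot_square_norm[symmetric] flip: power2_norm_eq_inner)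
    qed
    finally show ?thesis by linarith
  qed
  have "den * N = N - 2 * p * b" using cN by (simp add: den_def algebra_simps)
  also have "\<dots> = a \<bullet> a + b * b - 2 * b * (a \<bullet> x)" by (simp add: NN p_def algebra_simps)
  finally have den: "den > 0" using key N by (metis zero_less_mult_pos2)
  have hr: "hrefl a b x = (1 / den) *\<^sub>R (x - c *\<^sub>R a)"
    by (simp add: hrefl_def c_def den_def p_def N_def Let_def)
  have "x \<bullet> hrefl a b x = (x \<bullet> x - c * (a \<bullet> x)) / den"
    by (simp add: hr inner_simps inner_commute)
  hence "1 - x \<bullet> hrefl a b x = (den - (x \<bullet> x - c * (a \<bullet> x))) / den"
    using den by (simp add: diff_divide_distrib)
  moreover have "den - (x \<bullet> x - c * (a \<bullet> x)) = X2 + c * p"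
    by (simp add: den_def X2_def p_def algebra_simps)
  ultimately have e1: "1 - x \<bullet> hrefl a b x = (X2 + c * p) / den" by simp
  have "den^2 - (x - c *\<^sub>R a) \<bullet> (x - c *\<^sub>R a) = X2 + 2 * c * p - c * (c * N)"
    by (simp add: inner_simps power2_eq_square den_def X2_def p_def NN algebra_simps inner_commute)
  also have "\<dots> = X2" using cN by simp
  finally have e2': "den^2 - (x - c *\<^sub>R a) \<bullet> (x - c *\<^sub>R a) = X2" .
  have "norm (hrefl a b x) = norm (x - c *\<^sub>R a) / den" using den by (simp add: hr)
  hence "(norm (hrefl a b x))^2 = ((x - c *\<^sub>R a) \<bullet> (x - c *\<^sub>R a)) / den^2"
    by (simp add: power_divide power2_norm_eq_inner)
  moreover have "den^2 > 0" using den by simp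
  ultimately have "1 - (norm (hrefl a b x))^2 = (den^2 - (x - c *\<^sub>R a) \<bullet> (x - c *\<^sub>R a)) / den^2"
    by (simp add: diff_divide_distrib)
  hence e2: "1 - (norm (hrefl a b x))^2 = X2 / den^2"
    using e2' by simp
  have sq: "sqrt ((1 - (norm x)^2) * (1 - (norm (hrefl a b x))^2)) = X2 / den"
  proof -
    have "1 - (norm x)^2 = X2" by (simp add: X2_def power2_norm_eq_inner)
    hence "(1 - (norm x)^2) * (1 - (norm (hrefl a b x))^2) = X2 * (X2 / den^2)"
      by (simp only: e2)
    also have "\<dots> = (X2 / den)^2" by (simp add: power2_eq_square)
    finally have "(1 - (norm x)^2) * (1 - (norm (hrefl a b x))^2) = (X2 / den)^2" .
    thus ?thesis using den X2 by simp
  qed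
  have "(1 - x \<bullet> hrefl a b x) / sqrt ((1 - (norm x)^2) * (1 - (norm (hrefl a b x))^2)) = 1 + c * p / X2"
    using den X2 by (simp only: e1 sq) (simp add: field_simps)
  also have "c * p / X2 = 2 * p^2 / (N * (1 - (norm x)^2))"
    by (simp add: c_def X2_def power2_norm_eq_inner[symmetric]) (simp add: power2_eq_square)
  finally show ?thesis by (simp add: hdist_def)
qed

lemma mink_pos:
  fixes w z :: "real^'n"
  assumes "w \<bullet> z = \<omega>" "norm z \<le> 1"
  shows "\<omega>^2 \<le> w \<bullet> w"
proof -
  have "\<bar>\<omega>\<bar> \<le> norm w * norm z" using assms(1) Cauchy_Schwarz_ineq2[of w z] by simp
  also have "\<dots> \<le> norm w" using assms(2) by (simp add: mult_left_le)
  finally have "\<omega>^2 \<le> (norm w)^2" by (metis abs_le_square_iff abs_norm_cancel)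
  thus ?thesis by (simp add: power2_norm_eq_inner)
qed

lemma refl_key:
  fixes x z a :: "real^'n"
  assumes x: "norm x < 1" and z: "norm z < 1" and hp: "hyp_pair a b" and az: "a \<bullet> z = b"
  shows "(a \<bullet> x - b)^2 * (1 - z \<bullet> z) \<le> lorentz a b a b * ((1 - x \<bullet> z)^2 - (1 - x \<bullet> x) * (1 - z \<bullet> z))"
proof -
  define N where "N = lorentz a b a b"
  have N: "N > 0" using hyp_pair_N[OF hp] by (simp add: N_def)
  have NN: "a \<bullet> a = N + b * b" by (simp add: N_def lorentz_def)
  define Z2 where "Z2 = 1 - z \<bullet> z"
  have "norm z * norm z < 1 * 1" using z by (intro mult_strict_mono) auto
  hence Z2: "Z2 > 0" by (simp add: Z2_def power2_norm_eq_inner[symmetric] power2_eq_square)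
  define m where "m = 1 - x \<bullet> z"
  define p where "p = a \<bullet> x - b"
  define X2 where "X2 = 1 - x \<bullet> x"
  define l where "l = m / Z2"
  define t where "t = p / N"
  have lZ: "l * Z2 = m" using Z2 by (simp add: l_def)
  have tN: "t * N = p" using N by (simp add: t_def)
  define w where "w = x - l *\<^sub>R z - t *\<^sub>R a"
  define om where "om = 1 - l - t * b"
  have "w \<bullet> z = x \<bullet> z - l * (z \<bullet> z) - t * b"
    by (simp add: w_def inner_simps az inner_commute)
  also have "\<dots> = om" using lZ by (simp add: om_def Z2_def m_def algebra_simps)
  finally have "om^2 \<le> w \<bullet> w" using z by (intro mink_pos) auto
  moreover have "w \<bullet> w - om^2 = (x \<bullet> x - 2 * l * (x \<bullet> z) + l^2 * (z \<bullet> z) - (1 - l)^2)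
       - 2 * t * ((a \<bullet> x - l * (a \<bullet> z)) - b * (1 - l)) + t^2 * (a \<bullet> a - b^2)"
    by (simp add: w_def om_def inner_simps inner_commute power2_eq_square algebra_simps)
  moreover have "(a \<bullet> x - l * (a \<bullet> z)) - b * (1 - l) = p" by (simp add: az p_def algebra_simps)
  moreover have "x \<bullet> x - 2 * l * (x \<bullet> z) + l^2 * (z \<bullet> z) - (1 - l)^2 = - X2 + 2 * l * m - l * (l * Z2)"
    by (simp add: X2_def m_def Z2_def power2_eq_square algebra_simps)
  moreover have "t^2 * (a \<bullet> a - b^2) = t * (t * N)" by (simp add: NN power2_eq_square)
  ultimately have "0 \<le> - X2 + 2 * l * m - l * (l * Z2) - 2 * t * p + t * (t * N)" by simp
  moreover have "l * (l * Z2) = l * m" "t * (t * N) = t * p" by (simp_all add: lZ tN)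
  ultimately have "0 \<le> - X2 + l * m - t * p" by linarith
  hence "0 \<le> (- X2 + l * m - t * p) * (N * Z2)" using N Z2 by simp
  also have "\<dots> = - X2 * N * Z2 + (l * Z2) * m * N - (t * N) * p * Z2" by (simp add: algebra_simps)
  also have "\<dots> = - X2 * N * Z2 + m * m * N - p * p * Z2" by (simp add: lZ tN)
  finally have "p * p * Z2 \<le> N * (m * m - X2 * Z2)" by (simp add: algebra_simps mult.commute)
  thus ?thesis by (simp add: N_def p_def m_def X2_def Z2_def power2_eq_square)
qed

lemma refl_close:
  fixes x z a :: "real^'n"
  assumes x: "norm x < 1" and z: "norm z < 1" and hp: "hyp_pair a b" and az: "a \<bullet> z = b"
    and rho: "(1 - x \<bullet> z) / sqrt ((1 - (norm x)^2) * (1 - (norm z)^2)) \<le> cosh (1/2)"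
  shows "hdist x (hrefl a b x) \<le> 1"
proof -
  define N where "N = lorentz a b a b"
  have N: "N > 0" using hyp_pair_N[OF hp] by (simp add: N_def)
  define p where "p = a \<bullet> x - b"
  define X2 where "X2 = 1 - x \<bullet> x"
  define Z2 where "Z2 = 1 - z \<bullet> z"
  define m where "m = 1 - x \<bullet> z"
  have "norm z * norm z < 1 * 1" using z by (intro mult_strict_mono) auto
  hence Z2: "Z2 > 0" by (simp add: Z2_def power2_norm_eq_inner[symmetric] power2_eq_square)
  have "norm x * norm x < 1 * 1" using x by (intro mult_strict_mono) auto
  hence X2: "X2 > 0" by (simp add: X2_def power2_norm_eq_inner[symmetric] power2_eq_square)
  have "norm x * norm z < 1 * 1" using x z by (intro mult_strict_mono) auto
  hence "x \<bullet> z < 1" using Cauchy_Schwarz_ineq2[of x z] by linarith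
  hence m: "m > 0" by (simp add: m_def)
  have key: "p^2 * Z2 \<le> N * (m^2 - X2 * Z2)"
    using refl_key[OF x z hp az] by (simp add: N_def p_def m_def X2_def Z2_def)
  have rr: "(norm x)^2 = x \<bullet> x" "(norm z)^2 = z \<bullet> z" by (simp_all add: power2_norm_eq_inner)
  have "m / sqrt (X2 * Z2) \<le> cosh (1/2)" using rho by (simp add: rr m_def X2_def Z2_def)
  hence "(m / sqrt (X2 * Z2))^2 \<le> (cosh (1/2))^2"
    using m X2 Z2 by (intro power_mono) auto
  hence rho2: "m^2 / (X2 * Z2) \<le> (cosh (1/2))^2"
    using X2 Z2 by (simp add: power_divide)
  have "p^2 / (N * X2) \<le> m^2 / (X2 * Z2) - 1"
  proof -
    have "p^2 / (N * X2) = (p^2 * Z2) / (N * X2 * Z2)" using Z2 by simp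
    also have "\<dots> \<le> (N * (m^2 - X2 * Z2)) / (N * X2 * Z2)"
      using key N X2 Z2 by (intro divide_right_mono) auto
    also have "\<dots> = m^2 / (X2 * Z2) - 1" using N X2 Z2 by (simp add: field_simps)
    finally show ?thesis .
  qed
  hence u_le: "1 + 2 * p^2 / (N * X2) \<le> cosh 1"
    using rho2 cosh_double_cosh[of "1/2::real"] by simp
  have u_ge: "1 \<le> 1 + 2 * p^2 / (N * X2)" using N X2 by simp
  have hd: "hdist x (hrefl a b x) = arcosh (1 + 2 * p^2 / (N * X2))"
    using hrefl_ratio[OF x hp] by (simp add: N_def p_def X2_def rr)
  have "\<not> arcosh (cosh 1) < arcosh (1 + 2 * p^2 / (N * X2))"
    using u_le u_ge cosh_real_ge_1[of 1] by (subst arcosh_less_iff_real) auto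
  thus ?thesis by (simp add: hd arcosh_cosh_real)
qed



lemma DIM_vec_n: "DIM(real^'n) = CARD('n)" by simp

lemma hrefl_scale:
  fixes a :: "real^'n"
  assumes "t \<noteq> 0"
  shows "hrefl (t *\<^sub>R a) (t * b) = hrefl a b"
proof
  fix x :: "real^'n"
  have L: "lorentz (t *\<^sub>R a) (t * b) (t *\<^sub>R a) (t * b) = t * t * lorentz a b a b"
    by (simp add: lorentz_def inner_simps algebra_simps)
  define c where "c = 2 * (a \<bullet> x - b) / lorentz a b a b"
  have c': "2 * ((t *\<^sub>R a) \<bullet> x - t * b) / lorentz (t *\<^sub>R a) (t * b) (t *\<^sub>R a) (t * b) = c / t"
    using assms unfolding L c_def
    by (cases "lorentz a b a b = 0") (simp_all add: inner_simps field_simps)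
  show "hrefl (t *\<^sub>R a) (t * b) x = hrefl a b x"
    unfolding hrefl_def Let_def c' using assms by (simp add: c_def)
qed

lemma parallel_normal:
  fixes a a' :: "'a::euclidean_space"
  assumes "a \<noteq> 0" "\<And>u. a \<bullet> u = 0 \<Longrightarrow> a' \<bullet> u = 0"
  shows "a' = ((a' \<bullet> a) / (a \<bullet> a)) *\<^sub>R a"
proof -
  define t where "t = (a' \<bullet> a) / (a \<bullet> a)"
  define u where "u = a' - t *\<^sub>R a"
  have aa: "a \<bullet> a \<noteq> 0" using assms(1) by simp
  have "a \<bullet> u = 0" using aa by (simp add: u_def t_def inner_simps inner_commute)
  hence "a' \<bullet> u = 0" by (rule assms(2))
  hence "u \<bullet> u = 0" using \<open>a \<bullet> u = 0\<close> by (simp add: u_def inner_simps inner_commute)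
  hence "u = 0" by simp
  thus ?thesis by (simp add: u_def t_def)
qed

lemma bdry_facet:
  fixes Q :: "(real^'n) set"
  assumes polyQ: "polyhedron Q" and intQ: "interior Q \<noteq> {}" and PQ: "P = kball \<inter> Q"
    and zP: "z \<in> P" and zQ: "z \<notin> interior Q"
  obtains a b where "facet_pair P a b" "a \<bullet> z = b"
proof -
  have "z \<in> Q - rel_interior Q" using zP zQ PQ rel_interior_nonempty_interior[OF intQ] by auto
  then obtain F where F: "F facet_of Q" "z \<in> F" using rel_boundary_of_polyhedron[OF polyQ] by auto
  then obtain a b where ab: "a \<noteq> 0" "Q \<subseteq> {x. a \<bullet> x \<le> b}" "F = Q \<inter> {x. a \<bullet> x = b}"
    using facet_of_polyhedron[OF polyQ] by metis
  have zb: "a \<bullet> z = b" using F ab by auto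
  have zk: "norm z < 1" using zP PQ by (simp add: kball_def)
  have "\<bar>b\<bar> \<le> norm a * norm z" using zb Cauchy_Schwarz_ineq2[of a z] by simp
  also have "\<dots> < norm a" using zk ab(1) by simp
  finally have hp: "hyp_pair a b" using ab(1) by (simp add: hyp_pair_def)
  have hf: "hface P a b = F \<inter> kball" using ab PQ by (auto simp: hface_def)
  have "aff_dim F = aff_dim Q - 1" using F by (simp add: facet_of_def)
  also have "aff_dim Q = int CARD('n)" using aff_dim_nonempty_interior[OF intQ] by simp
  finally have dF: "aff_dim F = int CARD('n) - 1" .
  have "convex F" using F(1) by (meson facet_of_imp_face_of face_of_imp_convex)
  hence "aff_dim (F \<inter> kball) = aff_dim F"
    using F(2) zP PQ by (intro aff_dim_convex_Int_open) (auto simp: kball_def)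
  hence "aff_dim (hface P a b) = int CARD('n) - 1" using hf dF by simp
  moreover have "\<forall>x\<in>P. a \<bullet> x \<le> b" using ab PQ by auto
  ultimately have "facet_pair P a b" using hp by (simp add: facet_pair_def)
  thus ?thesis using zb that by blast
qed

lemma gen_facet:
  fixes Q :: "(real^'n) set"
  assumes polyQ: "polyhedron Q" and intQ: "interior Q \<noteq> {}" and PQ: "P = kball \<inter> Q"
    and fp: "facet_pair P a b"
  obtains G where "G facet_of Q"
    "\<And>a' b'. a' \<noteq> 0 \<Longrightarrow> Q \<subseteq> {x. a' \<bullet> x \<le> b'} \<Longrightarrow> G = Q \<inter> {x. a' \<bullet> x = b'} \<Longrightarrow> hrefl a' b' = hrefl a b"
proof -
  define F0 where "F0 = hface P a b"
  have a0: "a \<noteq> 0" and valid: "\<forall>x\<in>P. a \<bullet> x \<le> b" and dF0: "aff_dim F0 = int CARD('n) - 1"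
    using fp by (auto simp: facet_pair_def hyp_pair_def F0_def)
  have convP: "convex P" using PQ polyhedron_imp_convex[OF polyQ]
    by (simp add: kball_def convex_Int)
  have "F0 = P \<inter> {x. a \<bullet> x = b}" by (auto simp: F0_def hface_def)
  hence convF0: "convex F0" using convP by (simp add: convex_Int convex_hyperplane)
  have "F0 \<noteq> {}"
  proof
    assume "F0 = {}"
    hence "aff_dim F0 = -1" by simp
    thus False using dF0 by simp
  qed
  hence "rel_interior F0 \<noteq> {}" using convF0 by (simp add: rel_interior_eq_empty)
  then obtain x1 where x1: "x1 \<in> rel_interior F0" by blast
  then obtain e where e: "e > 0" "ball x1 e \<inter> affine hull F0 \<subseteq> F0" "x1 \<in> F0"
    by (auto simp: mem_rel_interior_ball)
  have x1P: "x1 \<in> P" and x1b: "a \<bullet> x1 = b" using e(3) by (auto simp: F0_def hface_def)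
  have x1Q: "x1 \<notin> interior Q"
  proof
    assume "x1 \<in> interior Q"
    moreover have "x1 \<in> interior kball" using x1P PQ by (simp add: kball_def)
    ultimately have "x1 \<in> interior P" using PQ by (simp add: interior_Int)
    then obtain r where r: "r > 0" "ball x1 r \<subseteq> P" using mem_interior by blast
    define y where "y = x1 + (r / (2 * norm a)) *\<^sub>R a"
    have "dist x1 y = r / 2" using a0 r by (simp add: y_def dist_norm)
    hence "y \<in> P" using r by auto
    moreover have "a \<bullet> y = b + (r / (2 * norm a)) * (a \<bullet> a)" by (simp add: y_def inner_simps x1b)
    moreover have "(r / (2 * norm a)) * (a \<bullet> a) > 0" using a0 r by simp
    ultimately show False using valid by fastforce
  qed
  have "x1 \<in> Q - rel_interior Q" using x1P x1Q PQ rel_interior_nonempty_interior[OF intQ] by auto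
  then obtain G where G: "G facet_of Q" "x1 \<in> G" using rel_boundary_of_polyhedron[OF polyQ] by auto
  have ah: "affine hull F0 = {x. a \<bullet> x = b}"
  proof (rule affine_dim_equal)
    show "affine (affine hull F0)" by simp
    show "affine {x. a \<bullet> x = b}" by (simp add: affine_hyperplane)
    show "affine hull F0 \<noteq> {}" using \<open>F0 \<noteq> {}\<close> by simp
    show "affine hull F0 \<subseteq> {x. a \<bullet> x = b}"
      by (rule hull_minimal) (auto simp: F0_def hface_def affine_hyperplane)
    show "aff_dim (affine hull F0) = aff_dim {x. a \<bullet> x = b}"
      using dF0 a0 by simp
  qed
  show ?thesis
  proof (rule that[OF G(1)])
    fix a' b' assume a'0: "a' \<noteq> 0" and Qv: "Q \<subseteq> {x. a' \<bullet> x \<le> b'}" and Geq: "G = Q \<inter> {x. a' \<bullet> x = b'}"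
    have x1b': "a' \<bullet> x1 = b'" using G(2) Geq by auto
    have orth: "a' \<bullet> u = 0" if au: "a \<bullet> u = 0" for u
    proof (cases "u = 0")
      case True thus ?thesis by simp
    next
      case False
      define d where "d = e / (2 * norm u)"
      have d: "d > 0" using False e by (simp add: d_def)
      have inQ: "x1 + s *\<^sub>R u \<in> Q" if "\<bar>s\<bar> = d" for s
      proof -
        have "dist x1 (x1 + s *\<^sub>R u) = e / 2" using that False e d
          by (simp add: dist_norm d_def)
        hence "x1 + s *\<^sub>R u \<in> ball x1 e" using e by simp
        moreover have "x1 + s *\<^sub>R u \<in> affine hull F0" using ah au x1b by (simp add: inner_simps)
        ultimately have "x1 + s *\<^sub>R u \<in> F0" using e(2) by blast
        thus ?thesis using PQ by (auto simp: F0_def hface_def)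
      qed
      have "a' \<bullet> (x1 + d *\<^sub>R u) \<le> b'" using inQ[of d] Qv d by auto
      hence 1: "d * (a' \<bullet> u) \<le> 0" using x1b' by (simp add: inner_simps)
      have "a' \<bullet> (x1 + (-d) *\<^sub>R u) \<le> b'" using inQ[of "-d"] Qv d by auto
      hence 2: "d * (a' \<bullet> u) \<ge> 0" using x1b' by (simp add: inner_simps)
      from 1 2 d show ?thesis by (simp add: mult_le_0_iff zero_le_mult_iff)
    qed
    define t where "t = (a' \<bullet> a) / (a \<bullet> a)"
    have a'eq: "a' = t *\<^sub>R a" using parallel_normal[OF a0 orth] by (simp add: t_def)
    have t0: "t \<noteq> 0" using a'0 a'eq by auto
    have "b' = t * b" using x1b' x1b a'eq by (simp add: inner_simps)
    thus "hrefl a' b' = hrefl a b" using a'eq hrefl_scale[OF t0] by simp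
  qed
qed

lemma gen_finite:
  fixes Q :: "(real^'n) set"
  assumes polyQ: "polyhedron Q" and intQ: "interior Q \<noteq> {}" and PQ: "P = kball \<inter> Q"
  shows "finite {hrefl a b | a b. facet_pair P a b}"
proof -
  define pick where "pick G = (SOME ab. fst ab \<noteq> 0 \<and> Q \<subseteq> {x. fst ab \<bullet> x \<le> snd ab} \<and> G = Q \<inter> {x. fst ab \<bullet> x = snd ab})" for G
  have pick: "fst (pick G) \<noteq> 0 \<and> Q \<subseteq> {x. fst (pick G) \<bullet> x \<le> snd (pick G)} \<and> G = Q \<inter> {x. fst (pick G) \<bullet> x = snd (pick G)}"
    if GQ: "G facet_of Q" for G
  proof -
    obtain a b where "a \<noteq> 0" "Q \<subseteq> {x. a \<bullet> x \<le> b}" "G = Q \<inter> {x. a \<bullet> x = b}"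
      using facet_of_polyhedron[OF polyQ GQ] by metis
    hence "\<exists>ab. fst ab \<noteq> 0 \<and> Q \<subseteq> {x. fst ab \<bullet> x \<le> snd ab} \<and> G = Q \<inter> {x. fst ab \<bullet> x = snd ab}"
      by (intro exI[of _ "(a,b)"]) simp
    thus ?thesis unfolding pick_def by (rule someI_ex)
  qed
  have "{hrefl a b | a b. facet_pair P a b} \<subseteq> (\<lambda>G. hrefl (fst (pick G)) (snd (pick G))) ` {G. G facet_of Q}"
  proof
    fix f assume "f \<in> {hrefl a b | a b. facet_pair P a b}"
    then obtain a b where f: "f = hrefl a b" "facet_pair P a b" by blast
    obtain G where G: "G facet_of Q"
      "\<And>a' b'. a' \<noteq> 0 \<Longrightarrow> Q \<subseteq> {x. a' \<bullet> x \<le> b'} \<Longrightarrow> G = Q \<inter> {x. a' \<bullet> x = b'} \<Longrightarrow> hrefl a' b' = hrefl a b"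
      using gen_facet[OF polyQ intQ PQ f(2)] by metis
    have "hrefl (fst (pick G)) (snd (pick G)) = f" using G pick[OF G(1)] f(1) by blast
    thus "f \<in> (\<lambda>G. hrefl (fst (pick G)) (snd (pick G))) ` {G. G facet_of Q}" using G(1) by blast
  qed
  moreover have "finite {G. G facet_of Q}"
    by (rule finite_subset[OF _ finite_polyhedron_faces[OF polyQ]]) (auto simp: facet_of_def)
  ultimately show ?thesis by (meson finite_imageI finite_subset)
qed



lemma refl_group_lists:
  assumes "g \<in> refl_group P"
  shows "\<exists>l. set l \<subseteq> {hrefl a b | a b. facet_pair P a b} \<and> g = foldr (\<circ>) l id"
  using assms
proof (induction rule: refl_group.induct)
  case id_in
  show ?case by (intro exI[of _ "[]"]) simp
next
  case (step a b g)
  then obtain l where "set l \<subseteq> {hrefl a b | a b. facet_pair P a b}" "g = foldr (\<circ>) l id" by blast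
  moreover have "foldr (\<circ>) (hrefl a b # l) id = hrefl a b \<circ> foldr (\<circ>) l id" by simp
  ultimately show ?case using step(1)
    apply (intro exI[of _ "hrefl a b # l"] conjI)
     apply auto[1]
    apply (simp only:)
    done
qed

lemma refl_group_countable:
  assumes "finite {hrefl a b | a b. facet_pair P a b}"
  shows "countable (refl_group P)"
proof -
  have "refl_group P \<subseteq> (\<lambda>l. foldr (\<circ>) l id) ` lists {hrefl a b | a b. facet_pair P a b}"
    using refl_group_lists by blast
  moreover have "countable (lists {hrefl a b | a b. facet_pair P a b})"
    using assms by (intro countable_lists countable_finite)
  ultimately show ?thesis by (meson countable_image countable_subset)
qed

lemma hrefl_measurable[measurable]: "hrefl a b \<in> borel_measurable borel"
  unfolding hrefl_def Let_def by measurable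

lemma refl_group_measurable:
  assumes "g \<in> refl_group P" shows "g \<in> borel_measurable borel"
  using assms by (induction rule: refl_group.induct) auto

lemma hdist_measurable:
  assumes [measurable]: "f \<in> borel_measurable M" "g \<in> borel_measurable M"
  shows "(\<lambda>x. hdist (f x) (g x)) \<in> borel_measurable M"
  unfolding hdist_def arcosh_def by measurable

lemma P_le_sets:
  assumes cnt: "countable (refl_group P)" and Pb: "P \<in> sets borel"
  shows "P_le P R \<in> sets borel"
proof -
  have eq: "P_le P R = P \<inter> (\<Union>g\<in>{g\<in>refl_group P. \<exists>y\<in>kball. g y \<noteq> y}. {x. hdist x (g x) \<le> R / 2})"
    by (auto simp: P_le_def)
  have "(\<Union>g\<in>{g\<in>refl_group P. \<exists>y\<in>kball. g y \<noteq> y}. {x. hdist x (g x) \<le> R / 2}) \<in> sets borel"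
  proof (rule sets.countable_UN'')
    show "countable {g\<in>refl_group P. \<exists>y\<in>kball. g y \<noteq> y}" using cnt by (rule countable_subset[rotated]) auto
    fix g assume "g \<in> {g\<in>refl_group P. \<exists>y\<in>kball. g y \<noteq> y}"
    hence [measurable]: "g \<in> borel_measurable borel" using refl_group_measurable by blast
    have [measurable]: "(\<lambda>x. hdist x (g x)) \<in> borel_measurable borel"
      by (rule hdist_measurable) auto
    show "{x. hdist x (g x) \<le> R / 2} \<in> sets borel" by measurable
  qed
  thus ?thesis using Pb eq by auto
qed



definition G :: "nat \<Rightarrow> real \<Rightarrow> real \<Rightarrow> ennreal" where
  "G m \<sigma> \<tau> = (\<integral>\<^sup>+ s. ennreal (cosh s ^ m) * indicator {\<sigma>..\<tau>} s \<partial>lborel)"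

lemma cosh_meas[measurable]: "(cosh :: real \<Rightarrow> real) \<in> borel_measurable borel"
  by (intro borel_measurable_continuous_onI continuous_intros)

lemma G_mono: "\<sigma>' \<le> \<sigma> \<Longrightarrow> \<tau> \<le> \<tau>' \<Longrightarrow> G m \<sigma> \<tau> \<le> G m \<sigma>' \<tau>'"
  unfolding G_def by (intro nn_integral_mono) (auto split: split_indicator)

lemma G_split: "G m \<sigma> \<tau> \<le> G m \<sigma> \<mu> + G m \<mu> \<tau>"
proof -
  have "G m \<sigma> \<tau> \<le> (\<integral>\<^sup>+ s. ennreal (cosh s ^ m) * indicator {\<sigma>..\<mu>} s + ennreal (cosh s ^ m) * indicator {\<mu>..\<tau>} s \<partial>lborel)"
    unfolding G_def by (intro nn_integral_mono) (auto split: split_indicator)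
  also have "\<dots> = G m \<sigma> \<mu> + G m \<mu> \<tau>" unfolding G_def by (rule nn_integral_add) auto
  finally show ?thesis .
qed

lemma G_shift: "G m (\<sigma> - h) (\<tau> - h) = (\<integral>\<^sup>+ x. ennreal (cosh (x - h) ^ m) * indicator {\<sigma>..\<tau>} x \<partial>lborel)"
proof -
  have "G m (\<sigma> - h) (\<tau> - h) = ennreal \<bar>1\<bar> * (\<integral>\<^sup>+ x. ennreal (cosh (-h + 1 * x) ^ m) * indicator {\<sigma> - h..\<tau> - h} (-h + 1 * x) \<partial>lborel)"
    unfolding G_def by (rule nn_integral_real_affine) auto
  also have "\<dots> = (\<integral>\<^sup>+ x. ennreal (cosh (x - h) ^ m) * indicator {\<sigma>..\<tau>} x \<partial>lborel)"
    by (auto intro!: nn_integral_cong split: split_indicator)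
  finally show ?thesis .
qed

lemma G_neg: "G m (-\<tau>) (-\<sigma>) = G m \<sigma> \<tau>"
proof -
  have "G m (-\<tau>) (-\<sigma>) = ennreal \<bar>-1\<bar> * (\<integral>\<^sup>+ x. ennreal (cosh (0 + (-1) * x) ^ m) * indicator {-\<tau>..-\<sigma>} (0 + (-1) * x) \<partial>lborel)"
    unfolding G_def by (rule nn_integral_real_affine) auto
  also have "\<dots> = G m \<sigma> \<tau>"
    unfolding G_def by (auto intro!: nn_integral_cong split: split_indicator)
  finally show ?thesis .
qed

lemma G_ge_len: assumes "\<sigma> \<le> \<tau>" shows "ennreal (\<tau> - \<sigma>) \<le> G m \<sigma> \<tau>"
proof -
  have "ennreal (\<tau> - \<sigma>) = (\<integral>\<^sup>+ s. indicator {\<sigma>..\<tau>} s \<partial>lborel)" using assms by simp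
  also have "\<dots> \<le> G m \<sigma> \<tau>" unfolding G_def
  proof (intro nn_integral_mono)
    fix s :: real
    have "1 \<le> cosh s ^ m" using cosh_real_ge_1[of s] by (simp add: one_le_power)
    thus "indicator {\<sigma>..\<tau>} s \<le> ennreal (cosh s ^ m) * indicator {\<sigma>..\<tau>} s"
      by (auto split: split_indicator)
  qed
  finally show ?thesis .
qed

definition qq :: real where "qq = 1 / cosh (1/2)"

lemma qq: "0 < qq" "qq < 1"
proof -
  have "cosh (1/2::real) > cosh 0" by (subst cosh_real_nonneg_less_iff) auto
  thus "0 < qq" "qq < 1" by (auto simp: qq_def)
qed

lemma cosh_ratio:
  fixes u :: real assumes "u \<ge> 1/2" and "m \<ge> 1"
  shows "cosh (u - 1/2) ^ m \<le> qq * cosh u ^ m"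
proof -
  define h :: real where "h = 1/2"
  have sh: "sinh h > 0" by (simp add: h_def)
  have "sinh (u - h) \<ge> 0" using assms by (simp add: h_def)
  hence 1: "cosh u * sinh h \<le> sinh u * cosh h" by (simp add: sinh_diff)
  have "cosh (u - h) * cosh h = cosh u * (cosh h)^2 - sinh u * sinh h * cosh h"
    by (simp add: cosh_diff power2_eq_square algebra_simps)
  also have "\<dots> = cosh u * (sinh h ^ 2 + 1) - sinh u * sinh h * cosh h"
    by (simp only: cosh_square_eq)
  also have "\<dots> = cosh u + sinh h * (cosh u * sinh h - sinh u * cosh h)"
    by (simp add: algebra_simps power2_eq_square)
  also have "\<dots> \<le> cosh u" using 1 sh by (simp add: mult_le_0_iff)
  finally have "cosh (u - h) \<le> cosh u / cosh h" by (simp add: field_simps)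
  hence r: "cosh (u - h) \<le> qq * cosh u" by (simp add: qq_def h_def)
  have "cosh (u - h) ^ m \<le> (qq * cosh u) ^ m" using r by (intro power_mono) auto
  also have "\<dots> = qq ^ m * cosh u ^ m" by (simp add: power_mult_distrib)
  also have "\<dots> \<le> qq * cosh u ^ m"
  proof (rule mult_right_mono)
    show "qq ^ m \<le> qq" using power_decreasing[of 1 m qq] qq assms(2) by simp
  qed simp
  finally show ?thesis by (simp add: h_def)
qed

definition KK :: real where "KK = max 2 (1 / (1 - qq))"

lemma KK: "KK \<ge> 2" "KK * qq + 1 \<le> KK"
proof -
  show "KK \<ge> 2" by (simp add: KK_def)
  have "1 / (1 - qq) \<le> KK" by (simp add: KK_def)
  hence "1 \<le> KK * (1 - qq)" using qq by (simp add: field_simps)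
  thus "KK * qq + 1 \<le> KK" by (simp add: algebra_simps)
qed

lemma G_chunk:
  assumes "s \<ge> 1" "m \<ge> 1"
  shows "G m (s - 1) (s - 1/2) \<le> ennreal qq * G m (s - 1/2) s"
proof -
  have "G m (s - 1) (s - 1/2) = G m ((s - 1/2) - 1/2) (s - 1/2)" by simp
  also have "\<dots> = (\<integral>\<^sup>+ x. ennreal (cosh (x - 1/2) ^ m) * indicator {s - 1/2..s} x \<partial>lborel)"
    by (rule G_shift)
  also have "\<dots> \<le> (\<integral>\<^sup>+ x. ennreal qq * (ennreal (cosh x ^ m) * indicator {s - 1/2..s} x) \<partial>lborel)"
  proof (intro nn_integral_mono)
    fix x :: real
    show "ennreal (cosh (x - 1/2) ^ m) * indicator {s - 1/2..s} x \<le> ennreal qq * (ennreal (cosh x ^ m) * indicator {s - 1/2..s} x)"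
    proof (cases "x \<in> {s - 1/2..s}")
      case True
      hence "cosh (x - 1/2) ^ m \<le> qq * cosh x ^ m" using assms by (intro cosh_ratio) auto
      thus ?thesis using True qq by (simp add: ennreal_mult[symmetric] ennreal_leI)
    qed simp
  qed
  also have "\<dots> = ennreal qq * G m (s - 1/2) s" unfolding G_def by (rule nn_integral_cmult) auto
  finally show ?thesis .
qed

lemma G_base:
  assumes "1/2 \<le> s" "s \<le> 1"
  shows "G m 0 (s - 1/2) \<le> G m (1/2) s"
proof -
  have "G m 0 (s - 1/2) = G m (1/2 - 1/2) (s - 1/2)" by simp
  also have "\<dots> = (\<integral>\<^sup>+ x. ennreal (cosh (x - 1/2) ^ m) * indicator {1/2..s} x \<partial>lborel)"
    by (rule G_shift)
  also have "\<dots> \<le> G m (1/2) s" unfolding G_def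
  proof (intro nn_integral_mono)
    fix x :: real
    show "ennreal (cosh (x - 1/2) ^ m) * indicator {1/2..s} x \<le> ennreal (cosh x ^ m) * indicator {1/2..s} x"
    proof (cases "x \<in> {1/2..s}")
      case True
      hence "cosh (x - 1/2) \<le> cosh x" by (subst cosh_real_nonneg_le_iff) auto
      hence "cosh (x - 1/2) ^ m \<le> cosh x ^ m" by (intro power_mono) auto
      thus ?thesis using True by (simp add: ennreal_leI)
    qed simp
  qed
  finally show ?thesis .
qed

lemma G_half_aux:
  assumes "m \<ge> 1"
  shows "\<forall>s. 1/2 \<le> s \<and> s \<le> real n / 2 + 1 \<longrightarrow> G m 0 s \<le> ennreal KK * G m (s - 1/2) s"
proof (induction n)
  case 0
  show ?case
  proof (intro allI impI)
    fix s :: real assume s: "1/2 \<le> s \<and> s \<le> real 0 / 2 + 1"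
    have "G m 0 s \<le> G m 0 (s - 1/2) + G m (s - 1/2) s" by (rule G_split)
    also have "G m 0 (s - 1/2) \<le> G m (s - 1/2) s"
      using G_base[of s m] G_mono[of "s - 1/2" "1/2" s s m] s by auto
    finally have "G m 0 s \<le> 2 * G m (s - 1/2) s" by (simp add: mult_2)
    also have "\<dots> \<le> ennreal KK * G m (s - 1/2) s"
      using KK(1) by (intro mult_right_mono) (auto simp: ennreal_leI[of 2 KK, simplified])
    finally show "G m 0 s \<le> ennreal KK * G m (s - 1/2) s" .
  qed
next
  case (Suc n)
  show ?case
  proof (intro allI impI)
    fix s :: real assume s: "1/2 \<le> s \<and> s \<le> real (Suc n) / 2 + 1"
    show "G m 0 s \<le> ennreal KK * G m (s - 1/2) s"
    proof (cases "s \<le> real n / 2 + 1")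
      case True thus ?thesis using Suc.IH s by blast
    next
      case False
      hence s1: "s \<ge> 1" by simp
      have "G m 0 s \<le> G m 0 (s - 1/2) + G m (s - 1/2) s" by (rule G_split)
      also have "G m 0 (s - 1/2) \<le> ennreal KK * G m (s - 1/2 - 1/2) (s - 1/2)"
      proof -
        have "1/2 \<le> s - 1/2 \<and> s - 1/2 \<le> real n / 2 + 1" using s s1 by (simp add: field_simps)
        thus ?thesis using Suc.IH by blast
      qed
      also have "G m (s - 1/2 - 1/2) (s - 1/2) \<le> ennreal qq * G m (s - 1/2) s"
        using G_chunk[OF s1 assms] by simp
      finally have "G m 0 s \<le> ennreal KK * (ennreal qq * G m (s - 1/2) s) + G m (s - 1/2) s"
        by (simp add: add_right_mono mult_left_mono)
      also have "\<dots> = ennreal (KK * qq + 1) * G m (s - 1/2) s"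
        using qq KK by (simp add: ennreal_mult distrib_right mult.assoc ennreal_plus[symmetric])
      also have "\<dots> \<le> ennreal KK * G m (s - 1/2) s"
        using KK(2) by (intro mult_right_mono ennreal_leI) auto
      finally show ?thesis .
    qed
  qed
qed

lemma G_zero:
  assumes "m \<ge> 1" "s \<ge> 0"
  shows "G m 0 s \<le> ennreal KK * G m (s - 1/2) s"
proof (cases "s \<ge> 1/2")
  case True
  define n where "n = nat (ceiling (2 * s))"
  have "real n \<ge> 2 * s" unfolding n_def by linarith
  hence "1/2 \<le> s \<and> s \<le> real n / 2 + 1" using True by simp
  thus ?thesis using G_half_aux[OF assms(1), of n] by blast
next
  case False
  have "G m 0 s \<le> G m (s - 1/2) s" using False by (intro G_mono) auto
  also have "\<dots> = ennreal 1 * G m (s - 1/2) s" by simp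
  also have "\<dots> \<le> ennreal KK * G m (s - 1/2) s" using KK(1) by (intro mult_right_mono ennreal_leI) auto
  finally show ?thesis .
qed

lemma G_main:
  assumes "m \<ge> 1" "\<sigma> \<le> \<tau>"
  shows "G m \<sigma> \<tau> \<le> ennreal KK * (G m \<sigma> (min (\<sigma> + 1/2) \<tau>) + G m (max (\<tau> - 1/2) \<sigma>) \<tau>)"
proof (cases "\<tau> - \<sigma> \<le> 1/2")
  case True
  hence e: "min (\<sigma> + 1/2) \<tau> = \<tau>" "max (\<tau> - 1/2) \<sigma> = \<sigma>" by auto
  have "G m \<sigma> \<tau> \<le> G m \<sigma> \<tau> + G m \<sigma> \<tau>" by simp
  also have "\<dots> = ennreal 1 * (G m \<sigma> \<tau> + G m \<sigma> \<tau>)" by simp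
  also have "\<dots> \<le> ennreal KK * (G m \<sigma> \<tau> + G m \<sigma> \<tau>)" using KK(1) by (intro mult_right_mono ennreal_leI) auto
  finally show ?thesis by (simp add: e)
next
  case False
  hence e: "min (\<sigma> + 1/2) \<tau> = \<sigma> + 1/2" "max (\<tau> - 1/2) \<sigma> = \<tau> - 1/2" by auto
  have right: "G m 0 \<tau> \<le> ennreal KK * G m (\<tau> - 1/2) \<tau>" if "\<tau> \<ge> 0" using G_zero[OF assms(1) that] .
  have left: "G m \<sigma> 0 \<le> ennreal KK * G m \<sigma> (\<sigma> + 1/2)" if "\<sigma> \<le> 0"
  proof -
    have "G m \<sigma> 0 = G m 0 (-\<sigma>)" using G_neg[of m 0 \<sigma>] by simp
    also have "\<dots> \<le> ennreal KK * G m (-\<sigma> - 1/2) (-\<sigma>)" using G_zero[OF assms(1)] that by simp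
    also have "G m (-\<sigma> - 1/2) (-\<sigma>) = G m \<sigma> (\<sigma> + 1/2)" using G_neg[of m "\<sigma> + 1/2" \<sigma>] by simp
    finally show ?thesis .
  qed
  show ?thesis unfolding e
  proof (cases "\<sigma> \<ge> 0")
    case True
    have "G m \<sigma> \<tau> \<le> G m 0 \<tau>" using True by (intro G_mono) auto
    also have "\<dots> \<le> ennreal KK * G m (\<tau> - 1/2) \<tau>" using right True assms by simp
    also have "\<dots> \<le> ennreal KK * (G m \<sigma> (\<sigma> + 1/2) + G m (\<tau> - 1/2) \<tau>)"
      by (intro mult_left_mono) auto
    finally show "G m \<sigma> \<tau> \<le> ennreal KK * (G m \<sigma> (\<sigma> + 1/2) + G m (\<tau> - 1/2) \<tau>)" .
  next
    case sneg: False
    show "G m \<sigma> \<tau> \<le> ennreal KK * (G m \<sigma> (\<sigma> + 1/2) + G m (\<tau> - 1/2) \<tau>)"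
    proof (cases "\<tau> \<le> 0")
      case True
      have "G m \<sigma> \<tau> \<le> G m \<sigma> 0" using True by (intro G_mono) auto
      also have "\<dots> \<le> ennreal KK * G m \<sigma> (\<sigma> + 1/2)" using left sneg by simp
      also have "\<dots> \<le> ennreal KK * (G m \<sigma> (\<sigma> + 1/2) + G m (\<tau> - 1/2) \<tau>)"
        by (intro mult_left_mono) auto
      finally show ?thesis .
    next
      case False
      have "G m \<sigma> \<tau> \<le> G m \<sigma> 0 + G m 0 \<tau>" by (rule G_split)
      also have "\<dots> \<le> ennreal KK * G m \<sigma> (\<sigma> + 1/2) + ennreal KK * G m (\<tau> - 1/2) \<tau>"
        using left right sneg False by (intro add_mono) auto
      also have "\<dots> = ennreal KK * (G m \<sigma> (\<sigma> + 1/2) + G m (\<tau> - 1/2) \<tau>)"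
        by (simp add: distrib_left)
      finally show ?thesis .
    qed
  qed
qed



lemma one_minus_tanh2: "1 - tanh (s::real) ^ 2 = 1 / cosh s ^ 2"
proof -
  have c: "cosh s \<noteq> 0" using cosh_real_pos[of s] by linarith
  have "1 - tanh s ^ 2 = (cosh s ^ 2 - sinh s ^ 2) / cosh s ^ 2"
    using c by (simp add: tanh_def field_simps power2_eq_square)
  also have "cosh s ^ 2 - sinh s ^ 2 = 1" by (simp add: cosh_square_eq)
  finally show ?thesis .
qed

lemma chord_density:
  fixes a s :: real
  assumes a: "a > 0" and d: "d \<ge> 1"
  shows "((a * a - (a * tanh s)^2) powr (-(real d + 1)/2)) * (a * (1 - tanh s ^ 2)) = cosh s ^ (d - 1) / a ^ d"
proof -
  define c where "c = cosh s"
  have c: "c > 0" by (simp add: c_def)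
  have "a * a - (a * tanh s)^2 = a^2 * (1 - tanh s ^ 2)" by (simp add: power2_eq_square algebra_simps)
  also have "\<dots> = a^2 / c^2" by (simp add: one_minus_tanh2 c_def)
  also have "\<dots> = (a / c)^2" by (simp add: power_divide)
  finally have "a * a - (a * tanh s)^2 = (a / c)^2" .
  hence "(a * a - (a * tanh s)^2) powr (-(real d + 1)/2) = ((a / c) powr 2) powr (-(real d + 1)/2)"
    using a c by (simp add: powr_realpow)
  also have "\<dots> = (a / c) powr (- real (d + 1))"
  proof -
    have "2 * (-(real d + 1)/2) = - real (d + 1)" by simp
    thus ?thesis by (simp only: powr_powr)
  qed
  also have "\<dots> = inverse ((a / c) powr real (d + 1))" by (rule powr_minus)
  also have "(a / c) powr real (d + 1) = (a / c) ^ (d + 1)" using a c by (intro powr_realpow) simp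
  also have "inverse ((a / c) ^ (d + 1)) = 1 / (a / c) ^ (d + 1)" by (simp add: divide_inverse)
  also have "\<dots> = c ^ (d + 1) / a ^ (d + 1)" by (simp add: power_divide)
  finally have 1: "(a * a - (a * tanh s)^2) powr (-(real d + 1)/2) = c ^ (d + 1) / a ^ (d + 1)" .
  have 2: "a * (1 - tanh s ^ 2) = a / c ^ 2" by (simp add: one_minus_tanh2 c_def)
  have "c ^ (d + 1) = c ^ (d - 1) * c ^ 2" using d by (simp add: power_add[symmetric])
  moreover have "a ^ (d + 1) = a ^ d * a" by simp
  ultimately have "c ^ (d + 1) / a ^ (d + 1) * (a / c ^ 2) = c ^ (d - 1) / a ^ d"
    using a c by (simp add: field_simps)
  thus ?thesis using 1 2 by (simp add: c_def)
qed

lemma chord_subst: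
  fixes a :: real
  assumes a: "a > 0" and d: "d \<ge> 1" and st: "\<sigma> \<le> \<tau>"
  shows "(\<integral>\<^sup>+ y. ennreal ((a * a - y^2) powr (-(real d + 1)/2) * indicator {a * tanh \<sigma>..a * tanh \<tau>} y) \<partial>lborel)
       = ennreal (1 / a ^ d) * G (d - 1) \<sigma> \<tau>"
proof -
  have "(\<integral>\<^sup>+ y. ennreal ((a * a - y^2) powr (-(real d + 1)/2) * indicator {a * tanh \<sigma>..a * tanh \<tau>} y) \<partial>lborel)
     = (\<integral>\<^sup>+ s. ennreal ((a * a - (a * tanh s)^2) powr (-(real d + 1)/2) * (a * (1 - tanh s ^ 2)) * indicator {\<sigma>..\<tau>} s) \<partial>lborel)"
  proof (rule nn_integral_substitution[where g = "\<lambda>s. a * tanh s" and f = "\<lambda>y. (a * a - y^2) powr (-(real d + 1)/2)", OF _ _ _ _ st])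
    show "set_borel_measurable borel {a * tanh \<sigma>..a * tanh \<tau>} (\<lambda>y. (a * a - y^2) powr (-(real d + 1)/2))"
      unfolding set_borel_measurable_def by measurable
    fix x :: real
    show "((\<lambda>s. a * tanh s) has_real_derivative a * (1 - tanh x ^ 2)) (at x)"
      using cosh_real_pos[of x] by (auto intro!: derivative_eq_intros)
    show "0 \<le> a * (1 - tanh x ^ 2)" using a by (simp add: one_minus_tanh2)
  next
    show "continuous_on {\<sigma>..\<tau>} (\<lambda>x. a * (1 - tanh x ^ 2))"
      by (intro continuous_intros) (auto simp: cosh_real_pos[THEN less_imp_neq, symmetric])
  qed
  also have "\<dots> = (\<integral>\<^sup>+ s. ennreal (1 / a ^ d) * (ennreal (cosh s ^ (d - 1)) * indicator {\<sigma>..\<tau>} s) \<partial>lborel)"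
  proof (intro nn_integral_cong)
    fix s :: real
    show "ennreal ((a * a - (a * tanh s)^2) powr (-(real d + 1)/2) * (a * (1 - tanh s ^ 2)) * indicator {\<sigma>..\<tau>} s)
        = ennreal (1 / a ^ d) * (ennreal (cosh s ^ (d - 1)) * indicator {\<sigma>..\<tau>} s)"
      using a by (subst chord_density[OF a d]) (simp add: ennreal_mult[symmetric] split: split_indicator)
  qed
  also have "\<dots> = ennreal (1 / a ^ d) * G (d - 1) \<sigma> \<tau>" unfolding G_def by (rule nn_integral_cmult) auto
  finally show ?thesis .
qed



lemma tanh_artanh_real: assumes "\<bar>u\<bar> < (1::real)" shows "tanh (artanh u) = u"
proof -
  have p: "(1 + u) / (1 - u) > 0" using assms by (auto simp: abs_less_iff)
  have "exp (- 2 * artanh u) = (1 - u) / (1 + u)"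
  proof -
    have "- 2 * artanh u = - ln ((1 + u) / (1 - u))" by (simp add: artanh_def)
    hence "exp (- 2 * artanh u) = inverse ((1 + u) / (1 - u))" using p by (simp add: exp_minus)
    thus ?thesis by simp
  qed
  moreover have "1 + u > 0" "1 - u > 0" using assms by (auto simp: abs_less_iff)
  moreover have "tanh (artanh u) = (1 - exp (- 2 * artanh u)) / (1 + exp (- 2 * artanh u))"
    by (rule tanh_real_altdef)
  moreover have "(1 - (1 - u) / (1 + u)) / (1 + (1 - u) / (1 + u)) = u"
    using \<open>1 + u > 0\<close> by (simp add: field_simps)
  ultimately show ?thesis by simp
qed

lemma rho_tanh:
  assumes a: "a > (0::real)"
  shows "(a * a - (a * tanh s) * (a * tanh t)) / sqrt ((a * a - (a * tanh s)^2) * (a * a - (a * tanh t)^2)) = cosh (s - t)"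
proof -
  have cs: "cosh s > 0" and ct: "cosh t > 0" by simp_all
  have "a * a - (a * tanh s)^2 = a^2 * (1 - tanh s ^ 2)" by (simp add: power2_eq_square algebra_simps)
  also have "\<dots> = a^2 / (cosh s)^2" by (simp add: one_minus_tanh2)
  also have "\<dots> = (a / cosh s)^2" by (simp add: power_divide)
  finally have 1: "a * a - (a * tanh s)^2 = (a / cosh s)^2" .
  have "a * a - (a * tanh t)^2 = a^2 * (1 - tanh t ^ 2)" by (simp add: power2_eq_square algebra_simps)
  also have "\<dots> = a^2 / (cosh t)^2" by (simp add: one_minus_tanh2)
  also have "\<dots> = (a / cosh t)^2" by (simp add: power_divide)
  finally have 2: "a * a - (a * tanh t)^2 = (a / cosh t)^2" .
  have e1: "sqrt ((a * a - (a * tanh s)^2) * (a * a - (a * tanh t)^2)) = (a / cosh s) * (a / cosh t)"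
    unfolding 1 2 using a cs ct by (simp add: real_sqrt_mult)
  have e2: "a * a - (a * tanh s) * (a * tanh t) = a * a * (1 - tanh s * tanh t)" by (simp add: algebra_simps)
  have "(a * a - (a * tanh s) * (a * tanh t)) / sqrt ((a * a - (a * tanh s)^2) * (a * a - (a * tanh t)^2))
      = a * a * (1 - tanh s * tanh t) / ((a / cosh s) * (a / cosh t))" by (simp only: e1 e2)
  also have "\<dots> = (1 - tanh s * tanh t) * cosh s * cosh t" using a cs ct by (simp add: field_simps)
  finally have "(a * a - (a * tanh s) * (a * tanh t)) / sqrt ((a * a - (a * tanh s)^2) * (a * a - (a * tanh t)^2))
      = (1 - tanh s * tanh t) * cosh s * cosh t" .
  also have "\<dots> = cosh s * cosh t - sinh s * sinh t" using cs ct by (simp add: tanh_def field_simps)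
  also have "\<dots> = cosh (s - t)" by (simp add: cosh_diff)
  finally show ?thesis .
qed

definition wI :: "real \<Rightarrow> nat \<Rightarrow> real set \<Rightarrow> ennreal" where
  "wI a d S = (\<integral>\<^sup>+ y. ennreal ((a * a - y^2) powr (-(real d + 1)/2) * indicator S y) \<partial>lborel)"

lemma wI_mono: "S \<subseteq> T \<Longrightarrow> wI a d S \<le> wI a d T"
  unfolding wI_def by (intro nn_integral_mono ennreal_leI) (auto split: split_indicator)

lemma wI_interval:
  assumes a: "a > 0" and d: "d \<ge> 1" and st: "\<sigma> \<le> \<tau>" and sub: "{a * tanh \<sigma>..a * tanh \<tau>} \<subseteq> S"
  shows "ennreal (1 / a ^ d) * G (d - 1) \<sigma> \<tau> \<le> wI a d S"
  using chord_subst[OF a d st] wI_mono[OF sub, of a d] by (simp add: wI_def)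

lemma wI_finite_len:
  assumes a: "a > 0" and d: "d \<ge> 1" and fin: "wI a d S < \<infinity>"
  obtains L where "\<And>\<sigma> \<tau>. \<sigma> \<le> \<tau> \<Longrightarrow> {a * tanh \<sigma>..a * tanh \<tau>} \<subseteq> S \<Longrightarrow> \<tau> - \<sigma> \<le> L"
proof -
  obtain r where r: "wI a d S = ennreal r" "r \<ge> 0" using fin by (cases "wI a d S") auto
  have "\<tau> - \<sigma> \<le> r * a ^ d" if st: "\<sigma> \<le> \<tau>" and sub: "{a * tanh \<sigma>..a * tanh \<tau>} \<subseteq> S" for \<sigma> \<tau>
  proof -
    have "ennreal (1 / a ^ d) * ennreal (\<tau> - \<sigma>) \<le> ennreal (1 / a ^ d) * G (d - 1) \<sigma> \<tau>"
      using G_ge_len[OF st] by (intro mult_left_mono) auto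
    also have "\<dots> \<le> ennreal r" using wI_interval[OF a d st sub] r by simp
    finally have "ennreal ((\<tau> - \<sigma>) / a ^ d) \<le> ennreal r"
      using a st by (simp add: ennreal_mult[symmetric])
    hence "(\<tau> - \<sigma>) / a ^ d \<le> r" using r(2) by (simp add: ennreal_le_iff)
    thus ?thesis using a by (simp add: field_simps)
  qed
  thus ?thesis using that by blast
qed

lemma chord_main:
  fixes a :: real and I E :: "real set"
  assumes a: "a > 0" and d: "d \<ge> 2"
    and Isub: "I \<subseteq> {-a<..<a}"
    and Iconv: "\<And>y1 y2 y. y1 \<in> I \<Longrightarrow> y2 \<in> I \<Longrightarrow> y1 \<le> y \<Longrightarrow> y \<le> y2 \<Longrightarrow> y \<in> I"
    and Icl: "\<And>y. -a < y \<Longrightarrow> y < a \<Longrightarrow> y \<in> closure I \<Longrightarrow> y \<in> I"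
    and bdry: "\<And>z y. z \<in> I \<Longrightarrow> (\<forall>\<epsilon>>0. \<exists>z'. -a < z' \<and> z' < a \<and> z' \<notin> I \<and> \<bar>z' - z\<bar> < \<epsilon>) \<Longrightarrow> y \<in> I
       \<Longrightarrow> (a * a - y * z) / sqrt ((a * a - y^2) * (a * a - z^2)) \<le> cosh (1/2) \<Longrightarrow> y \<in> E"
    and fin: "wI a d I < \<infinity>"
  shows "ennreal (1 / (2 * KK)) * wI a d I \<le> wI a d E"
proof (cases "I = {}")
  case True thus ?thesis by (simp add: wI_def)
next
  case False
  then obtain c where cI: "c \<in> I" by blast
  have d1: "d \<ge> 1" using d by simp
  have ba: "bdd_above I" using Isub by (auto intro!: bdd_aboveI[of _ a])
  have bb: "bdd_below I" using Isub by (auto intro!: bdd_belowI[of _ "-a"])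
  define y1 where "y1 = Sup I"
  define y0 where "y0 = Inf I"
  have ca: "-a < c" "c < a" using cI Isub by auto
  have "\<bar>c / a\<bar> < 1" using ca a by (simp add: abs_less_iff field_simps)
  define sc where "sc = artanh (c / a)"
  have csc: "a * tanh sc = c" using tanh_artanh_real[OF \<open>\<bar>c / a\<bar> < 1\<close>] a by (simp add: sc_def)
  obtain L where L: "\<And>\<sigma> \<tau>. \<sigma> \<le> \<tau> \<Longrightarrow> {a * tanh \<sigma>..a * tanh \<tau>} \<subseteq> I \<Longrightarrow> \<tau> - \<sigma> \<le> L"
    using wI_finite_len[OF a d1 fin] by blast
  have y1a: "y1 < a"
  proof (rule ccontr)
    assume "\<not> y1 < a"
    define \<tau> where "\<tau> = sc + \<bar>L\<bar> + 1"
    have "{a * tanh sc..a * tanh \<tau>} \<subseteq> I"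
    proof
      fix y assume y: "y \<in> {a * tanh sc..a * tanh \<tau>}"
      have "a * tanh \<tau> < a" using a tanh_real_lt_1[of \<tau>] by simp
      hence "y < Sup I" using y \<open>\<not> y1 < a\<close> by (auto simp: y1_def)
      then obtain y' where "y' \<in> I" "y < y'" using less_cSup_iff[OF False ba] by blast
      thus "y \<in> I" using Iconv[OF cI, of y' y] y csc by auto
    qed
    hence "\<tau> - sc \<le> L" by (intro L) (auto simp: \<tau>_def)
    thus False by (simp add: \<tau>_def)
  qed
  have y0a: "-a < y0"
  proof (rule ccontr)
    assume "\<not> -a < y0"
    define \<sigma> where "\<sigma> = sc - \<bar>L\<bar> - 1"
    have "{a * tanh \<sigma>..a * tanh sc} \<subseteq> I"
    proof
      fix y assume y: "y \<in> {a * tanh \<sigma>..a * tanh sc}"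
      have "-a < a * tanh \<sigma>" using mult_strict_left_mono[OF tanh_real_gt_neg1[of \<sigma>] a] by simp
      hence "Inf I < y" using y \<open>\<not> -a < y0\<close> by (auto simp: y0_def)
      then obtain y' where "y' \<in> I" "y' < y" using cInf_less_iff[OF False bb] by blast
      thus "y \<in> I" using Iconv[OF _ cI, of y' y] y csc by auto
    qed
    hence "sc - \<sigma> \<le> L" by (intro L) (auto simp: \<sigma>_def)
    thus False by (simp add: \<sigma>_def)
  qed
  have cy1: "c \<le> y1" unfolding y1_def using cI ba by (rule cSup_upper)
  have cy0: "y0 \<le> c" unfolding y0_def using cI bb by (rule cInf_lower)
  have y1I: "y1 \<in> I"
    using Icl[of y1] cy1 ca y1a closure_contains_Sup[OF False ba] by (simp add: y1_def)
  have y0I: "y0 \<in> I"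
    using Icl[of y0] cy0 ca y0a closure_contains_Inf[OF False bb] by (simp add: y0_def)
  have Ieq: "I = {y0..y1}"
  proof
    show "I \<subseteq> {y0..y1}" using ba bb by (auto simp: y0_def y1_def intro: cSup_upper cInf_lower)
    show "{y0..y1} \<subseteq> I" using Iconv[OF y0I y1I] by auto
  qed
  have "\<bar>y0 / a\<bar> < 1" "\<bar>y1 / a\<bar> < 1" using y0a y1a cy0 cy1 ca a by (auto simp: abs_less_iff field_simps)
  define s0 where "s0 = artanh (y0 / a)"
  define s1 where "s1 = artanh (y1 / a)"
  have ys0: "a * tanh s0 = y0" using tanh_artanh_real[OF \<open>\<bar>y0 / a\<bar> < 1\<close>] a by (simp add: s0_def)
  have ys1: "a * tanh s1 = y1" using tanh_artanh_real[OF \<open>\<bar>y1 / a\<bar> < 1\<close>] a by (simp add: s1_def)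
  have s01: "s0 \<le> s1"
  proof -
    have "a * tanh s0 \<le> a * tanh s1" using ys0 ys1 cy0 cy1 by simp
    hence "tanh s0 \<le> tanh s1" using a by simp
    thus ?thesis by simp
  qed
  have param: "\<exists>s. a * tanh s = y" if "-a < y" "y < a" for y
  proof -
    have "\<bar>y / a\<bar> < 1" using that a by (auto simp: abs_less_iff field_simps)
    thus ?thesis using tanh_artanh_real a by (intro exI[of _ "artanh (y / a)"]) simp
  qed
  have bd1: "\<forall>\<epsilon>>0. \<exists>z'. -a < z' \<and> z' < a \<and> z' \<notin> I \<and> \<bar>z' - y1\<bar> < \<epsilon>"
  proof (intro allI impI)
    fix \<epsilon> :: real assume e: "\<epsilon> > 0"
    define z' where "z' = min (y1 + \<epsilon> / 2) ((y1 + a) / 2)"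
    have "z' > y1" using e y1a by (simp add: z'_def)
    hence "z' \<notin> I" using Ieq by auto
    moreover have "z' \<le> (y1 + a) / 2" "z' \<le> y1 + \<epsilon> / 2" unfolding z'_def by (rule min.cobounded2, rule min.cobounded1)
    ultimately show "\<exists>z'. -a < z' \<and> z' < a \<and> z' \<notin> I \<and> \<bar>z' - y1\<bar> < \<epsilon>"
      using e y1a cy1 ca \<open>z' > y1\<close> by (intro exI[of _ z']) auto
  qed
  have bd0: "\<forall>\<epsilon>>0. \<exists>z'. -a < z' \<and> z' < a \<and> z' \<notin> I \<and> \<bar>z' - y0\<bar> < \<epsilon>"
  proof (intro allI impI)
    fix \<epsilon> :: real assume e: "\<epsilon> > 0"
    define z' where "z' = max (y0 - \<epsilon> / 2) ((y0 - a) / 2)"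
    have "z' < y0" using e y0a by (simp add: z'_def)
    hence "z' \<notin> I" using Ieq by auto
    moreover have "z' \<ge> (y0 - a) / 2" "z' \<ge> y0 - \<epsilon> / 2" unfolding z'_def by (rule max.cobounded2, rule max.cobounded1)
    ultimately show "\<exists>z'. -a < z' \<and> z' < a \<and> z' \<notin> I \<and> \<bar>z' - y0\<bar> < \<epsilon>"
      using e y0a cy0 ca \<open>z' < y0\<close> by (intro exI[of _ z']) auto
  qed
  define s0' where "s0' = min (s0 + 1/2) s1"
  define s1' where "s1' = max (s1 - 1/2) s0"
  have AE: "{a * tanh s0..a * tanh s0'} \<subseteq> E"
  proof
    fix y assume y: "y \<in> {a * tanh s0..a * tanh s0'}"
    have "a * tanh s0' \<le> a * tanh s1" using a by (simp add: s0'_def)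
    hence yI: "y \<in> I" using y ys0 ys1 Ieq by auto
    have "-a < y" "y < a" using yI Isub by auto
    then obtain s where s: "a * tanh s = y" using param by blast
    have "s0 \<le> s" "s \<le> s0'" using y s a by auto
    hence "cosh (s - s0) \<le> cosh (1/2)" by (subst cosh_real_nonneg_le_iff) (auto simp: s0'_def)
    hence "(a * a - y * y0) / sqrt ((a * a - y^2) * (a * a - y0^2)) \<le> cosh (1/2)"
      using rho_tanh[OF a, of s s0] s ys0 by simp
    thus "y \<in> E" using bdry[OF y0I bd0 yI] by blast
  qed
  have BE: "{a * tanh s1'..a * tanh s1} \<subseteq> E"
  proof
    fix y assume y: "y \<in> {a * tanh s1'..a * tanh s1}"
    have "a * tanh s0 \<le> a * tanh s1'" using a by (simp add: s1'_def)
    hence yI: "y \<in> I" using y ys0 ys1 Ieq by auto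
    have "-a < y" "y < a" using yI Isub by auto
    then obtain s where s: "a * tanh s = y" using param by blast
    have "s1' \<le> s" "s \<le> s1" using y s a by auto
    hence "cosh (s1 - s) \<le> cosh (1/2)" by (subst cosh_real_nonneg_le_iff) (auto simp: s1'_def)
    hence "cosh (s - s1) \<le> cosh (1/2)" by (metis cosh_minus minus_diff_eq)
    hence "(a * a - y * y1) / sqrt ((a * a - y^2) * (a * a - y1^2)) \<le> cosh (1/2)"
      using rho_tanh[OF a, of s s1] s ys1 by simp
    thus "y \<in> E" using bdry[OF y1I bd1 yI] by blast
  qed
  have s00: "s0 \<le> s0'" and s11: "s1' \<le> s1" using s01 by (auto simp: s0'_def s1'_def)
  have wII: "wI a d I = ennreal (1 / a ^ d) * G (d - 1) s0 s1"
    using chord_subst[OF a d1 s01] Ieq ys0 ys1 by (simp add: wI_def)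
  have wIA: "wI a d {a * tanh s0..a * tanh s0'} = ennreal (1 / a ^ d) * G (d - 1) s0 s0'"
    using chord_subst[OF a d1 s00] by (simp add: wI_def)
  have wIB: "wI a d {a * tanh s1'..a * tanh s1} = ennreal (1 / a ^ d) * G (d - 1) s1' s1"
    using chord_subst[OF a d1 s11] by (simp add: wI_def)
  define A where "A = {a * tanh s0..a * tanh s0'}"
  define B where "B = {a * tanh s1'..a * tanh s1}"
  have "ennreal (1/2) * wI a d A + ennreal (1/2) * wI a d B \<le> wI a d E"
  proof -
    have "ennreal (1/2) * wI a d A + ennreal (1/2) * wI a d B
       = (\<integral>\<^sup>+ y. ennreal (1/2) * ennreal ((a * a - y^2) powr (-(real d + 1)/2) * indicator A y)
            + ennreal (1/2) * ennreal ((a * a - y^2) powr (-(real d + 1)/2) * indicator B y) \<partial>lborel)"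
      unfolding wI_def by (subst nn_integral_add) (auto simp: nn_integral_cmult A_def B_def)
    also have "\<dots> \<le> wI a d E" unfolding wI_def
    proof (intro nn_integral_mono)
      fix y :: real
      define w where "w = (a * a - y^2) powr (-(real d + 1)/2)"
      have w0: "w \<ge> 0" by (simp add: w_def)
      have "ennreal (1/2) * ennreal (w * indicator A y) + ennreal (1/2) * ennreal (w * indicator B y)
            \<le> ennreal (w * indicator E y)"
      proof (cases "y \<in> E")
        case True
        have "ennreal (1/2) * ennreal (w * indicator A y) + ennreal (1/2) * ennreal (w * indicator B y)
            \<le> ennreal (1/2) * ennreal w + ennreal (1/2) * ennreal w"
          using w0 by (intro add_mono mult_left_mono ennreal_leI) (auto split: split_indicator)
        also have "\<dots> = (ennreal (1/2) + ennreal (1/2)) * ennreal w" by (simp only: distrib_right)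
        also have "ennreal (1/2) + ennreal (1/2) = 1" by (subst ennreal_plus[symmetric]) auto
        also have "1 * ennreal w = ennreal w" by simp
        finally show ?thesis using True by simp
      next
        case False
        hence "y \<notin> A" "y \<notin> B" using AE BE by (auto simp: A_def B_def)
        thus ?thesis by simp
      qed
      thus "ennreal (1/2) * ennreal ((a * a - y^2) powr (-(real d + 1)/2) * indicator A y)
            + ennreal (1/2) * ennreal ((a * a - y^2) powr (-(real d + 1)/2) * indicator B y)
            \<le> ennreal ((a * a - y^2) powr (-(real d + 1)/2) * indicator E y)" by (simp add: w_def)
    qed
    finally show ?thesis .
  qed
  moreover have "ennreal (1 / (2 * KK)) * wI a d I \<le> ennreal (1/2) * wI a d A + ennreal (1/2) * wI a d B"
  proof -
    have m1: "d - 1 \<ge> 1" using d by simp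
    have KK0: "KK > 0" using KK(1) by simp
    have "ennreal (1 / (2 * KK)) * wI a d I = ennreal (1 / (2 * KK)) * (ennreal (1 / a ^ d) * G (d - 1) s0 s1)"
      by (simp add: wII)
    also have "\<dots> \<le> ennreal (1 / (2 * KK)) * (ennreal (1 / a ^ d) * (ennreal KK * (G (d - 1) s0 s0' + G (d - 1) s1' s1)))"
      using G_main[OF m1 s01] by (intro mult_left_mono) (auto simp: s0'_def s1'_def)
    also have "\<dots> = (ennreal (1 / (2 * KK)) * ennreal KK) * (ennreal (1 / a ^ d) * G (d - 1) s0 s0' + ennreal (1 / a ^ d) * G (d - 1) s1' s1)"
      by (simp add: distrib_left mult_ac)
    also have "ennreal (1 / (2 * KK)) * ennreal KK = ennreal (1/2)"
      using KK0 by (simp add: ennreal_mult[symmetric])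
    also have "ennreal (1/2) * (ennreal (1 / a ^ d) * G (d - 1) s0 s0' + ennreal (1 / a ^ d) * G (d - 1) s1' s1)
        = ennreal (1/2) * wI a d A + ennreal (1/2) * wI a d B"
      by (simp add: wIA wIB A_def B_def distrib_left)
    finally show ?thesis .
  qed
  ultimately show ?thesis by (meson order_trans)
qed



lemma fubini_split:
  fixes F :: "'a::euclidean_space \<Rightarrow> ennreal" and b0 :: 'a
  assumes b0: "b0 \<in> Basis" and F[measurable]: "F \<in> borel_measurable borel"
  shows "(\<integral>\<^sup>+x. F x \<partial>lborel) =
    (\<integral>\<^sup>+g. (\<integral>\<^sup>+y. F ((\<Sum>b\<in>Basis-{b0}. g b *\<^sub>R b) + y *\<^sub>R b0) \<partial>lborel) \<partial>(Pi\<^sub>M (Basis - {b0}) (\<lambda>_. lborel)))"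
proof -
  interpret product_sigma_finite "\<lambda>_::'a. lborel::real measure" by standard
  have ins: "Basis = insert b0 (Basis - {b0})" using b0 by auto
  have "(\<integral>\<^sup>+x. F x \<partial>lborel) = (\<integral>\<^sup>+f. F (\<Sum>b\<in>Basis. f b *\<^sub>R b) \<partial>(Pi\<^sub>M Basis (\<lambda>_. lborel)))"
    by (subst lborel_eq) (simp add: nn_integral_distr)
  also have "\<dots> = (\<integral>\<^sup>+f. F (\<Sum>b\<in>Basis. f b *\<^sub>R b) \<partial>(Pi\<^sub>M (insert b0 (Basis - {b0})) (\<lambda>_. lborel)))"
    using ins by simp
  also have "\<dots> = (\<integral>\<^sup>+ x. (\<integral>\<^sup>+ y. F (\<Sum>b\<in>Basis. (x(b0 := y)) b *\<^sub>R b) \<partial>lborel) \<partial>(Pi\<^sub>M (Basis - {b0}) (\<lambda>_. lborel)))"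
  proof (rule product_nn_integral_insert)
    show "finite (Basis - {b0})" by simp
    show "b0 \<notin> Basis - {b0}" by simp
    have "(\<lambda>f. F (\<Sum>b\<in>Basis. f b *\<^sub>R b)) \<in> borel_measurable (Pi\<^sub>M Basis (\<lambda>_. lborel))" by measurable
    thus "(\<lambda>f. F (\<Sum>b\<in>Basis. f b *\<^sub>R b)) \<in> borel_measurable (Pi\<^sub>M (insert b0 (Basis - {b0})) (\<lambda>_. lborel))"
      using ins by simp
  qed
  also have "\<dots> = (\<integral>\<^sup>+g. (\<integral>\<^sup>+y. F ((\<Sum>b\<in>Basis-{b0}. g b *\<^sub>R b) + y *\<^sub>R b0) \<partial>lborel) \<partial>(Pi\<^sub>M (Basis - {b0}) (\<lambda>_. lborel)))"
  proof (intro nn_integral_cong)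
    fix x :: "'a \<Rightarrow> real" and y :: real
    have "(\<Sum>b\<in>Basis. (x(b0 := y)) b *\<^sub>R b) = (x(b0 := y)) b0 *\<^sub>R b0 + (\<Sum>b\<in>Basis-{b0}. (x(b0 := y)) b *\<^sub>R b)"
      using b0 by (simp add: sum.remove)
    also have "(\<Sum>b\<in>Basis-{b0}. (x(b0 := y)) b *\<^sub>R b) = (\<Sum>b\<in>Basis-{b0}. x b *\<^sub>R b)"
      by (intro sum.cong) auto
    finally show "F (\<Sum>b\<in>Basis. (x(b0 := y)) b *\<^sub>R b) = F ((\<Sum>b\<in>Basis-{b0}. x b *\<^sub>R b) + y *\<^sub>R b0)"
      by (simp add: add.commute)
  qed
  finally show ?thesis .
qed

lemma inner_meas:
  fixes F :: "'a::euclidean_space \<Rightarrow> ennreal" and b0 :: 'a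
  assumes F[measurable]: "F \<in> borel_measurable borel"
  shows "(\<lambda>g. \<integral>\<^sup>+y. F ((\<Sum>b\<in>Basis-{b0}. g b *\<^sub>R b) + y *\<^sub>R b0) \<partial>lborel) \<in> borel_measurable (Pi\<^sub>M (Basis - {b0}) (\<lambda>_. lborel))"
  by measurable



definition hdens :: "real^'n \<Rightarrow> ennreal" where
  "hdens x = indicator kball x * ennreal ((1 - (norm x)\<^sup>2) powr (- (real CARD('n) + 1) / 2))"

lemma hdens_meas[measurable]: "hdens \<in> borel_measurable borel"
proof -
  have 1: "(\<lambda>x::real^'n. (1 - (norm x)\<^sup>2) powr (- (real CARD('n) + 1) / 2)) \<in> borel_measurable borel"
    by (intro powr_real_measurable) auto
  have 2: "indicator kball \<in> borel_measurable (borel :: (real^'n) measure)"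
    unfolding kball_def by (intro borel_measurable_indicator) auto
  show ?thesis unfolding hdens_def using 1 2 by measurable
qed

lemma hvol_eq:
  fixes S :: "(real^'n) set"
  assumes "S \<in> sets borel"
  shows "hvol S = (\<integral>\<^sup>+x. hdens x * indicator S x \<partial>lborel)"
proof -
  have "(hvol_measure :: (real^'n) measure) = density lborel hdens" unfolding hvol_measure_def hdens_def by (simp add: fun_eq_iff)
  hence "hvol S = emeasure (density lborel hdens) S" unfolding hvol_def by simp
  also have "\<dots> = (\<integral>\<^sup>+x. hdens x * indicator S x \<partial>lborel)"
    by (rule emeasure_density) (auto simp: assms)
  finally show ?thesis .
qed

lemma hrefl_nontriv:
  fixes a :: "real^'n"
  assumes hp: "hyp_pair a b"
  shows "\<exists>y\<in>kball. hrefl a b y \<noteq> y"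
proof -
  have a0: "a \<noteq> 0" using hp by (simp add: hyp_pair_def)
  obtain y where y: "norm y < 1" "a \<bullet> y \<noteq> b"
  proof (cases "b = 0")
    case True
    define y where "y = (1 / (2 * norm a)) *\<^sub>R a"
    have "norm y = 1/2" using a0 by (simp add: y_def)
    moreover have "a \<bullet> y = norm a / 2" using a0 by (simp add: y_def power2_norm_eq_inner[symmetric] power2_eq_square)
    moreover have "norm a > 0" using a0 by simp
    ultimately have "norm y < 1" "a \<bullet> y \<noteq> b" using True by auto
    thus ?thesis by (rule that)
  next
    case False
    thus ?thesis using that[of 0] by simp
  qed
  have N: "lorentz a b a b > 0" using hyp_pair_N[OF hp] .
  have "norm y * norm y < 1 * 1" using y by (intro mult_strict_mono) auto
  hence X2: "1 - (norm y)^2 > 0" by (simp add: power2_eq_square)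
  have "(a \<bullet> y - b)^2 > 0" using y by simp
  hence gt: "1 + 2 * (a \<bullet> y - b)^2 / (lorentz a b a b * (1 - (norm y)^2)) > 1"
    using N X2 by simp
  have "hdist y (hrefl a b y) \<noteq> 0"
    using hrefl_ratio[OF y(1) hp] gt N X2 y(2) by simp
  moreover have "hdist y y = 0"
  proof -
    have yy: "(norm y)^2 = y \<bullet> y" by (simp add: power2_norm_eq_inner)
    have p: "1 - y \<bullet> y > 0" using X2 yy by simp
    have "(1 - y \<bullet> y) / sqrt ((1 - y \<bullet> y) * (1 - y \<bullet> y)) = 1"
    proof -
      have "sqrt ((1 - y \<bullet> y) * (1 - y \<bullet> y)) = 1 - y \<bullet> y"
        using real_sqrt_abs2[of "1 - y \<bullet> y"] abs_of_pos[OF p] by simp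
      thus ?thesis using p by simp
    qed
    thus ?thesis unfolding hdist_def yy by simp
  qed
  ultimately have "hrefl a b y \<noteq> y" by metis
  thus ?thesis using y by (auto simp: kball_def)
qed



lemma sq_lt_iff: "0 \<le> a \<Longrightarrow> (y^2 < a^2) = (\<bar>y\<bar> < (a::real))"
  by (metis abs_le_square_iff abs_of_nonneg not_le)

lemma lt1_sq: "0 \<le> t \<Longrightarrow> (t < 1) = (t^2 < (1::real))"
  using sq_lt_iff[of 1 t] by simp

lemma chord_ineq:
  fixes P Q :: "(real^'n) set" and v b0 :: "real^'n"
  assumes card: "CARD('n) \<ge> 2"
    and polyQ: "polyhedron Q" and intQ: "interior Q \<noteq> {}" and PQ: "P = kball \<inter> Q"
    and b0: "norm b0 = 1" and vb: "v \<bullet> b0 = 0"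
    and fin: "(\<integral>\<^sup>+y. hdens (v + y *\<^sub>R b0) * indicator P (v + y *\<^sub>R b0) \<partial>lborel) < \<infinity>"
  shows "ennreal (1 / (2 * KK)) * (\<integral>\<^sup>+y. hdens (v + y *\<^sub>R b0) * indicator P (v + y *\<^sub>R b0) \<partial>lborel)
     \<le> (\<integral>\<^sup>+y. hdens (v + y *\<^sub>R b0) * indicator (P_le P 2) (v + y *\<^sub>R b0) \<partial>lborel)"
proof -
  have bb: "b0 \<bullet> b0 = 1" using b0 by (simp add: power2_norm_eq_inner[symmetric])
  have vb': "b0 \<bullet> v = 0" using vb by (simp add: inner_commute)
  have nrm: "(norm (v + y *\<^sub>R b0))^2 = (norm v)^2 + y^2" for y
    unfolding power2_norm_eq_inner by (simp add: inner_simps vb vb' bb power2_eq_square)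
  have inn: "(v + y *\<^sub>R b0) \<bullet> (v + z *\<^sub>R b0) = (norm v)^2 + y * z" for y z
    unfolding power2_norm_eq_inner by (simp add: inner_simps vb vb' bb)
  show ?thesis
  proof (cases "norm v < 1")
    case False
    have "hdens (v + y *\<^sub>R b0) = 0" for y
    proof -
      have "(norm v)^2 \<ge> 1" using False lt1_sq[of "norm v"] by simp
      hence "(norm (v + y *\<^sub>R b0))^2 \<ge> 1" using nrm[of y] zero_le_power2[of y] by linarith
      hence "\<not> norm (v + y *\<^sub>R b0) < 1" using lt1_sq[of "norm (v + y *\<^sub>R b0)"] by simp
      thus ?thesis by (simp add: hdens_def kball_def)
    qed
    thus ?thesis by simp
  next
    case True
    define d where "d = CARD('n)"
    have d2: "d \<ge> 2" using card by (simp add: d_def)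
    have nv2: "(norm v)^2 < 1" using True lt1_sq[of "norm v"] by simp
    define a where "a = sqrt (1 - (norm v)^2)"
    have a: "a > 0" using nv2 by (simp add: a_def)
    have aa: "a * a = 1 - (norm v)^2" using nv2 by (simp add: a_def)
    have inball: "v + y *\<^sub>R b0 \<in> kball \<longleftrightarrow> -a < y \<and> y < a" for y
    proof -
      have "v + y *\<^sub>R b0 \<in> kball \<longleftrightarrow> (norm (v + y *\<^sub>R b0))^2 < 1"
        using lt1_sq[of "norm (v + y *\<^sub>R b0)"] by (simp add: kball_def)
      also have "\<dots> \<longleftrightarrow> y^2 < a^2" using nrm[of y] aa by (simp add: power2_eq_square) linarith
      also have "\<dots> \<longleftrightarrow> \<bar>y\<bar> < a" using a by (simp add: sq_lt_iff)
      finally show ?thesis by (simp add: abs_less_iff) linarith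
    qed
    have conv: "(\<integral>\<^sup>+y. hdens (v + y *\<^sub>R b0) * indicator S (v + y *\<^sub>R b0) \<partial>lborel) = wI a d {y. v + y *\<^sub>R b0 \<in> S}"
      if S: "S \<subseteq> kball" for S
      unfolding wI_def
    proof (intro nn_integral_cong)
      fix y :: real
      show "hdens (v + y *\<^sub>R b0) * indicator S (v + y *\<^sub>R b0)
          = ennreal ((a * a - y^2) powr (-(real d + 1)/2) * indicator {y. v + y *\<^sub>R b0 \<in> S} y)"
      proof (cases "v + y *\<^sub>R b0 \<in> S")
        case True
        hence "v + y *\<^sub>R b0 \<in> kball" using S by auto
        moreover have "1 - (norm (v + y *\<^sub>R b0))^2 = a * a - y^2" using nrm[of y] aa by simp
        ultimately show ?thesis using True by (simp add: hdens_def d_def)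
      qed simp
    qed
    define I where "I = {y. v + y *\<^sub>R b0 \<in> P}"
    define E where "E = {y. v + y *\<^sub>R b0 \<in> P_le P 2}"
    have Pk: "P \<subseteq> kball" using PQ by auto
    have Plek: "P_le P 2 \<subseteq> kball" using Pk by (auto simp: P_le_def)
    have cI: "(\<integral>\<^sup>+y. hdens (v + y *\<^sub>R b0) * indicator P (v + y *\<^sub>R b0) \<partial>lborel) = wI a d I"
      using conv[OF Pk] by (simp add: I_def)
    have cE: "(\<integral>\<^sup>+y. hdens (v + y *\<^sub>R b0) * indicator (P_le P 2) (v + y *\<^sub>R b0) \<partial>lborel) = wI a d E"
      using conv[OF Plek] by (simp add: E_def)
    have convP: "convex P" using PQ polyhedron_imp_convex[OF polyQ]
      by (simp add: kball_def convex_Int)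
    have closedQ: "closed Q" using polyhedron_imp_closed[OF polyQ] .
    have "ennreal (1 / (2 * KK)) * wI a d I \<le> wI a d E"
    proof (rule chord_main[OF a d2])
      show "I \<subseteq> {-a<..<a}"
      proof
        fix y assume "y \<in> I"
        hence "v + y *\<^sub>R b0 \<in> kball" using PQ by (simp add: I_def)
        hence "-a < y \<and> y < a" using inball[of y] by blast
        thus "y \<in> {-a<..<a}" by simp
      qed
      show "wI a d I < \<infinity>" using fin cI by simp
    next
      fix y1 y2 y assume y12: "y1 \<in> I" "y2 \<in> I" "y1 \<le> y" "y \<le> y2"
      show "y \<in> I"
      proof (cases "y1 = y2")
        case True thus ?thesis using y12 by simp
      next
        case False
        hence lt: "y1 < y2" using y12 by simp
        define t where "t = (y - y1) / (y2 - y1)"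
        have t: "0 \<le> t" "t \<le> 1" using y12 lt by (auto simp: t_def field_simps)
        have "(1 - t) *\<^sub>R (v + y1 *\<^sub>R b0) + t *\<^sub>R (v + y2 *\<^sub>R b0) = v + ((1 - t) * y1 + t * y2) *\<^sub>R b0"
          by (simp add: algebra_simps)
        also have "(1 - t) * y1 + t * y2 = y"
        proof -
          have "t * (y2 - y1) = y - y1" using lt by (simp add: t_def)
          thus ?thesis by (simp add: algebra_simps)
        qed
        finally have eq: "(1 - t) *\<^sub>R (v + y1 *\<^sub>R b0) + t *\<^sub>R (v + y2 *\<^sub>R b0) = v + y *\<^sub>R b0" .
        have "(1 - t) *\<^sub>R (v + y1 *\<^sub>R b0) + t *\<^sub>R (v + y2 *\<^sub>R b0) \<in> P"
          using y12 t convP by (intro convexD) (auto simp: I_def)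
        thus ?thesis using eq by (simp add: I_def)
      qed
    next
      fix y assume y: "-a < y" "y < a" "y \<in> closure I"
      have "closed ((\<lambda>y. v + y *\<^sub>R b0) -` Q)"
        by (intro continuous_closed_vimage closedQ) (auto intro!: continuous_intros)
      moreover have "I \<subseteq> (\<lambda>y. v + y *\<^sub>R b0) -` Q" using PQ by (auto simp: I_def)
      ultimately have "closure I \<subseteq> (\<lambda>y. v + y *\<^sub>R b0) -` Q" by (rule closure_minimal[rotated])
      hence "v + y *\<^sub>R b0 \<in> Q" using y by auto
      moreover have "v + y *\<^sub>R b0 \<in> kball" using inball y by simp
      ultimately show "y \<in> I" using PQ by (simp add: I_def)
    next
      fix z y
      assume zI: "z \<in> I" and apx: "\<forall>\<epsilon>>0. \<exists>z'. -a < z' \<and> z' < a \<and> z' \<notin> I \<and> \<bar>z' - z\<bar> < \<epsilon>"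
        and yI: "y \<in> I" and rho: "(a * a - y * z) / sqrt ((a * a - y^2) * (a * a - z^2)) \<le> cosh (1/2)"
      define xz where "xz = v + z *\<^sub>R b0"
      define x where "x = v + y *\<^sub>R b0"
      have xzP: "xz \<in> P" using zI by (simp add: I_def xz_def)
      have xP: "x \<in> P" using yI by (simp add: I_def x_def)
      have "xz \<notin> interior Q"
      proof
        assume "xz \<in> interior Q"
        then obtain r where r: "r > 0" "ball xz r \<subseteq> Q" using mem_interior by blast
        obtain z' where z': "-a < z'" "z' < a" "z' \<notin> I" "\<bar>z' - z\<bar> < r" using apx r by blast
        have "xz - (v + z' *\<^sub>R b0) = (z - z') *\<^sub>R b0" by (simp add: xz_def algebra_simps)
        hence "dist xz (v + z' *\<^sub>R b0) = \<bar>z - z'\<bar>" using b0 by (simp add: dist_norm)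
        hence "dist xz (v + z' *\<^sub>R b0) = \<bar>z' - z\<bar>" by simp
        hence "v + z' *\<^sub>R b0 \<in> Q" using r z' by auto
        moreover have "v + z' *\<^sub>R b0 \<in> kball" using inball z' by simp
        ultimately show False using z' PQ by (simp add: I_def)
      qed
      then obtain \<alpha> \<beta> where fp: "facet_pair P \<alpha> \<beta>" and ab: "\<alpha> \<bullet> xz = \<beta>"
        using bdry_facet[OF polyQ intQ PQ xzP] by blast
      have hp: "hyp_pair \<alpha> \<beta>" using fp by (simp add: facet_pair_def)
      have xk: "norm x < 1" and xzk: "norm xz < 1" using xP xzP PQ by (auto simp: kball_def)
      have "(1 - x \<bullet> xz) / sqrt ((1 - (norm x)^2) * (1 - (norm xz)^2))
          = (a * a - y * z) / sqrt ((a * a - y^2) * (a * a - z^2))"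
        using inn[of y z] nrm[of y] nrm[of z] aa by (simp add: x_def xz_def diff_diff_add)
      hence "hdist x (hrefl \<alpha> \<beta> x) \<le> 1" using refl_close[OF xk xzk hp ab] rho by simp
      moreover have "hrefl \<alpha> \<beta> \<in> refl_group P"
        using refl_group.step[OF fp refl_group.id_in] by simp
      moreover have "\<exists>y\<in>kball. hrefl \<alpha> \<beta> y \<noteq> y" by (rule hrefl_nontriv[OF hp])
      ultimately have "x \<in> P_le P 2" using xP by (auto simp: P_le_def)
      thus "y \<in> E" by (simp add: E_def x_def)
    qed
    thus ?thesis using cI cE by simp
  qed
qed



theorem theorem1:
  assumes "CARD('n) \<ge> 2"
  shows "\<exists>C::real. C > 0 \<and>
    (\<forall>P :: (real^'n) set. coxeter_polytope P \<longrightarrow>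
       hvol (P_le P 2) \<ge> ennreal C * hvol P)"
proof (intro exI[of _ "1 / (2 * KK)"] conjI allI impI)
  show "1 / (2 * KK) > 0" using KK(1) by simp
  fix P :: "(real^'n) set"
  assume cox: "coxeter_polytope P"
  hence hp: "hpolytope P" by (simp add: coxeter_polytope_def)
  then obtain H where H: "finite H" "\<forall>(a,b)\<in>H. hyp_pair a b" "P = {x \<in> kball. \<forall>(a,b)\<in>H. a \<bullet> x \<le> b}"
    and intP: "interior P \<noteq> {}" and finP: "hvol P < \<infinity>"
    unfolding hpolytope_def by blast
  define Q where "Q = {x::real^'n. \<forall>(a,b)\<in>H. a \<bullet> x \<le> b}"
  have Qeq: "Q = \<Inter> ((\<lambda>(a,b). {x. a \<bullet> x \<le> b}) ` H)" by (auto simp: Q_def)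
  have polyQ: "polyhedron Q" unfolding Qeq using H(1)
    by (intro polyhedron_Inter) (auto simp: polyhedron_halfspace_le)
  have PQ: "P = kball \<inter> Q" using H(3) by (auto simp: Q_def)
  have intQ: "interior Q \<noteq> {}" using intP PQ interior_mono[of P Q] by blast
  have Pb: "P \<in> sets borel" using PQ polyhedron_imp_closed[OF polyQ] by (auto simp: kball_def)
  have Pleb: "P_le P 2 \<in> sets borel"
    by (rule P_le_sets[OF refl_group_countable[OF gen_finite[OF polyQ intQ PQ]] Pb])
  obtain b0 :: "real^'n" where b0: "b0 \<in> Basis" using nonempty_Basis by blast
  have nb0: "norm b0 = 1" using b0 by (simp add: norm_Basis)
  define vv where "vv g = (\<Sum>b\<in>Basis-{b0}. g b *\<^sub>R b)" for g :: "real^'n \<Rightarrow> real"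
  have vvb: "vv g \<bullet> b0 = 0" for g
    unfolding vv_def inner_sum_left using b0 by (intro sum.neutral) (auto simp: inner_not_same_Basis)
  define M where "M = Pi\<^sub>M (Basis - {b0}) (\<lambda>_::real^'n. lborel::real measure)"
  define iP where "iP g = (\<integral>\<^sup>+y. hdens (vv g + y *\<^sub>R b0) * indicator P (vv g + y *\<^sub>R b0) \<partial>lborel)" for g
  define iL where "iL g = (\<integral>\<^sup>+y. hdens (vv g + y *\<^sub>R b0) * indicator (P_le P 2) (vv g + y *\<^sub>R b0) \<partial>lborel)" for g
  have mFP[measurable]: "(\<lambda>x. hdens x * indicator P x) \<in> borel_measurable borel" using Pb by measurable
  have mFL[measurable]: "(\<lambda>x. hdens x * indicator (P_le P 2) x) \<in> borel_measurable borel" using Pleb by measurable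
  have hP: "hvol P = integral\<^sup>N M iP"
    unfolding hvol_eq[OF Pb] fubini_split[OF b0, of "\<lambda>x. hdens x * indicator P x", OF mFP]
    by (simp add: M_def iP_def[abs_def] vv_def)
  have hL: "hvol (P_le P 2) = integral\<^sup>N M iL"
    unfolding hvol_eq[OF Pleb] fubini_split[OF b0, of "\<lambda>x. hdens x * indicator (P_le P 2) x", OF mFL]
    by (simp add: M_def iL_def[abs_def] vv_def)
  have mP: "iP \<in> borel_measurable M"
  proof -
    have "(\<lambda>g. \<integral>\<^sup>+y. (\<lambda>x. hdens x * indicator P x) ((\<Sum>b\<in>Basis-{b0}. g b *\<^sub>R b) + y *\<^sub>R b0) \<partial>lborel)
        \<in> borel_measurable (Pi\<^sub>M (Basis - {b0}) (\<lambda>_. lborel))"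
      by (rule inner_meas[OF mFP])
    thus ?thesis unfolding M_def iP_def[abs_def] vv_def by simp
  qed
  have ae: "AE g in M. iP g \<noteq> \<infinity>"
    by (rule nn_integral_PInf_AE[OF mP]) (use finP hP in simp)
  have "ennreal (1 / (2 * KK)) * hvol P = (\<integral>\<^sup>+g. ennreal (1 / (2 * KK)) * iP g \<partial>M)"
    using hP mP by (simp add: nn_integral_cmult)
  also have "\<dots> \<le> integral\<^sup>N M iL"
  proof (rule nn_integral_mono_AE)
    show "AE g in M. ennreal (1 / (2 * KK)) * iP g \<le> iL g"
      using ae
    proof (rule AE_mp, intro AE_I2 impI)
      fix g assume "iP g \<noteq> \<infinity>"
      thus "ennreal (1 / (2 * KK)) * iP g \<le> iL g"
        unfolding iP_def iL_def
        by (intro chord_ineq[OF assms polyQ intQ PQ nb0 vvb]) (simp add: top.not_eq_extremum)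
    qed
  qed
  finally show "ennreal (1 / (2 * KK)) * hvol P \<le> hvol (P_le P 2)" using hL by simp
qed

end
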